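(* Let $q\ge3$, $\delta\in(0,1)$, $\varepsilon\in(0,1/2]$, $c=4\ln(q/\varepsilon)$, $t=\lceil\log_c(2m)\rceil$, $\gamma=\varepsilon/(256c^2/\delta)^q$, and for $j_1,\dots,j_{q-1}\in[t]$ let $P_{j_1,\dots,j_{q-1}}=[2m]\times[c^{j_1-1},c^{j_1})\times\dots\times[c^{j_{q-1}-1},c^{j_{q-1}})$, where $(k,d_1,\dots,d_{q-1})$ is identified with the set $\{k,k+d_1,\dots,k+d_1+\dots+d_{q-1}\}$. Let $C:\{0,1\}^n\to\{0,1\}^m$ be a $(q,\delta,\varepsilon)$ insdel LDC with a non-adaptive decoder, with $m$ sufficiently large in terms of $\delta,\varepsilon$. Then for every $i\in[n]$ there exist $j_1,\dots,j_{q-1}\in[t]$ such that $|P_{j_1,\dots,j_{q-1}}\cap\mathrm{Good}_i|\ge\gamma|P_{j_1,\dots,j_{q-1}}|/(\log_2m+2)^{q-2}$.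
   Context: $C$ is a $(q,\delta,\varepsilon)$ insdel LDC if a randomized $\mathrm{Dec}$, given oracle access to $y\in\{0,1\}^{m'}$, $m'$ and $i\in[n]$, reads at most $q$ symbols and satisfies $\Pr[\mathrm{Dec}(y,m',i)=x_i]\ge1/2+\varepsilon$ whenever $\mathrm{ED}(C(x),y)\le2\delta m$, $\mathrm{ED}$ being insertion/deletion distance; non-adaptive means its query distribution does not depend on $y$. For $x\in\{0,1\}^n$, $C'(x)\in\{0,1\}^{2m}$ is $C(x)$ followed by $m$ independent uniform random bits. $\mathrm{Good}_i$ is the set of $Q\in\binom{[2m]}{q}$ such that some $f:\{0,1\}^q\to\{0,1\}$ has $\Pr[f(C'(x)_Q)=x_i]\ge1/2+\varepsilon/4$, over uniform $x$ and the padded bits ($C'(x)_Q$ is the restriction to $Q$ in increasing order). *)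

theory Defs
  imports "HOL-Probability.Probability_Mass_Function"
begin

text \<open>Binary strings are bool lists; positions and message indices are 0-based.\<close>

definition strings :: "nat \<Rightarrow> bool list set" where
  "strings n = {xs. length xs = n}"

definition insdel_step :: "'a list \<Rightarrow> 'a list \<Rightarrow> bool" where
  "insdel_step u v \<longleftrightarrow> (\<exists>xs ys a. (u = xs @ ys \<and> v = xs @ a # ys) \<or> (u = xs @ a # ys \<and> v = xs @ ys))"

definition ED :: "'a list \<Rightarrow> 'a list \<Rightarrow> nat" where
  "ED u v = (LEAST k. (insdel_step ^^ k) u v)"

text \<open>A non-adaptive randomized decoder: for each received length m' and index i,
  a distribution over a query tuple Q (positions in y) together with a decision
  function applied to the answers y_Q (the decision function may itself be random,
  which covers any randomized post-processing of the answers).\<close>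
type_synonym decoder = "nat \<Rightarrow> nat \<Rightarrow> (nat list \<times> (bool list \<Rightarrow> bool)) pmf"

definition dec_output_prob :: "decoder \<Rightarrow> bool list \<Rightarrow> nat \<Rightarrow> bool \<Rightarrow> real" where
  "dec_output_prob Dec y i b =
     measure_pmf.prob (Dec (length y) i) {(Q, f). f (map (\<lambda>p. y ! p) Q) = b}"

definition nonadaptive_insdel_LDC ::
  "nat \<Rightarrow> real \<Rightarrow> real \<Rightarrow> nat \<Rightarrow> nat \<Rightarrow> (bool list \<Rightarrow> bool list) \<Rightarrow> bool" where
  "nonadaptive_insdel_LDC q \<delta> \<epsilon> n m C \<longleftrightarrow>
     (\<forall>x\<in>strings n. length (C x) = m) \<and>
     (\<exists>Dec :: decoder.
        (\<forall>m' i Q f. (Q, f) \<in> set_pmf (Dec m' i) \<longrightarrow> length Q \<le> q \<and> (\<forall>p\<in>set Q. p < m')) \<and>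
        (\<forall>x\<in>strings n. \<forall>y :: bool list. \<forall>i<n.
            real (ED (C x) y) \<le> 2 * \<delta> * real m \<longrightarrow>
            dec_output_prob Dec y i (x ! i) \<ge> 1/2 + \<epsilon>))"

text \<open>C'(x) = C(x) followed by random bits r; restriction to Q in increasing order.\<close>
definition restrict_word :: "bool list \<Rightarrow> nat set \<Rightarrow> bool list" where
  "restrict_word w Q = map (\<lambda>p. w ! p) (sorted_list_of_set Q)"

definition Good :: "nat \<Rightarrow> real \<Rightarrow> nat \<Rightarrow> nat \<Rightarrow> (bool list \<Rightarrow> bool list) \<Rightarrow> nat \<Rightarrow> nat set set" where
  "Good q \<epsilon> n m C i =
     {Q. Q \<subseteq> {0..<2*m} \<and> card Q = q \<and>
        (\<exists>f :: bool list \<Rightarrow> bool.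
           real (card {(x, r). x \<in> strings n \<and> r \<in> strings m \<and>
                     f (restrict_word (C x @ r) Q) = x ! i}) / 2 ^ (n + m)
           \<ge> 1/2 + \<epsilon>/4)}"

definition tuple_set :: "nat \<times> nat list \<Rightarrow> nat set" where
  "tuple_set p = {fst p + sum_list (take l (snd p)) | l. l \<le> length (snd p)}"

text \<open>P_{j_1..j_{q-1}} = [2m] x [c^{j_1-1}, c^{j_1}) x ... (0-based k).\<close>
definition Pbox :: "real \<Rightarrow> nat \<Rightarrow> nat list \<Rightarrow> (nat \<times> nat list) set" where
  "Pbox c m js = {(k, ds). k < 2*m \<and> length ds = length js \<and>
       (\<forall>l<length js. c ^ (js!l - 1) \<le> real (ds!l) \<and> real (ds!l) < c ^ (js!l))}"

end

theory Submission
  imports Defs "HOL-Library.Sublist" "HOL-Library.FuncSet"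
begin


lemma step_Cons: "insdel_step u v \<Longrightarrow> insdel_step (a#u) (a#v)"
  unfolding insdel_step_def
  by (metis append_Cons)

lemma relpow_Cons: "(insdel_step ^^ k) u v \<Longrightarrow> (insdel_step ^^ k) (a#u) (a#v)"
proof (induction k arbitrary: v)
  case 0 then show ?case by simp
next
  case (Suc k)
  then obtain w where "(insdel_step ^^ k) u w" "insdel_step w v" by auto
  then show ?case using Suc.IH step_Cons by (metis relpowp_Suc_I)
qed

lemma del_head: "insdel_step (a#u) u"
  unfolding insdel_step_def by (metis append_Nil)

lemma ins_end: "insdel_step u (u@[a])"
  unfolding insdel_step_def by blast

lemma subseq_path: "subseq z w \<Longrightarrow> (insdel_step ^^ (length w - length z)) w z"
proof (induction z w rule: list_emb.induct)
  case (list_emb_Nil ys)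
  then show ?case
  proof (induction ys)
    case Nil then show ?case by simp
  next
    case (Cons a ys)
    have e: "length (a#ys) - length ([]::'a list) = Suc (length ys)" by simp
    show ?case unfolding e using relpowp_Suc_I2[OF del_head Cons.IH[simplified]] by simp
  qed
next
  case (list_emb_Cons xs ys y)
  have "length xs \<le> length ys" using list_emb_Cons.hyps list_emb_length by blast
  then have e: "length (y#ys) - length xs = Suc (length ys - length xs)" by simp
  show ?case unfolding e by (rule relpowp_Suc_I2[OF del_head list_emb_Cons.IH])
next
  case (list_emb_Cons2 x y xs ys)
  then show ?case using relpow_Cons by simp
qed

lemma append_path: "(insdel_step ^^ (length r)) z (z@r)"
proof (induction r rule: rev_induct)
  case Nil then show ?case by simp
next
  case (snoc a r)
  have e: "length (r @ [a]) = Suc (length r)" by simp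
  show ?case unfolding e using relpowp_Suc_I[OF snoc.IH ins_end[of "z@r" a]] by simp
qed

lemma ED_le: "(insdel_step ^^ k) u v \<Longrightarrow> ED u v \<le> k"
  unfolding ED_def by (rule Least_le)

lemma sorted_dec: "sorted_wrt (<) L \<Longrightarrow> \<forall>j\<in>set L. 0 < (j::nat) \<Longrightarrow> sorted_wrt (<) (map (\<lambda>j. j - 1) L)"
proof -
  assume a: "sorted_wrt (<) L" and p: "\<forall>j\<in>set L. 0 < (j::nat)"
  have "sorted_wrt (\<lambda>x y. x - 1 < y - 1) L"
    by (rule sorted_wrt_mono_rel[OF _ a]) (use p in auto)
  then show ?thesis by (simp add: sorted_wrt_map)
qed

lemma subseq_sel: "sorted_wrt (<) ixs \<Longrightarrow> (\<forall>i\<in>set ixs. i < length w) \<Longrightarrow> subseq (map ((!) w) ixs) w"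
proof (induction w arbitrary: ixs)
  case Nil then show ?case by (cases "ixs") auto
next
  case (Cons a w)
  note IH = Cons.IH and P1 = Cons.prems(1) and P2 = Cons.prems(2)
  show ?case
  proof (cases "ixs")
    case Nil then show ?thesis by simp
  next
    case (Cons i ixs')
    show ?thesis
    proof (cases "i = 0")
      case True
      have pos: "\<forall>j\<in>set ixs'. 0 < j" using P1 \<open>ixs = i#ixs'\<close> True by auto
      have s: "sorted_wrt (<) (map (\<lambda>j. j - 1) ixs')"
        using P1 \<open>ixs = i#ixs'\<close> pos sorted_dec by auto
      have b: "\<forall>j\<in>set (map (\<lambda>j. j - 1) ixs'). j < length w"
        using P2 \<open>ixs = i#ixs'\<close> pos by auto
      have e: "map ((!) (a#w)) ixs' = map ((!) w) (map (\<lambda>j. j - 1) ixs')"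
        using pos by (auto simp: nth_Cons')
      have "subseq (map ((!) (a#w)) ixs') w" unfolding e by (rule IH[OF s b])
      then show ?thesis using \<open>ixs = i#ixs'\<close> True by (simp add: list_emb_Cons2)
    next
      case False
      have pos: "\<forall>j\<in>set ixs. 0 < j" using P1 \<open>ixs = i#ixs'\<close> False by auto
      have s: "sorted_wrt (<) (map (\<lambda>j. j - 1) ixs)"
        using P1 pos sorted_dec by auto
      have b: "\<forall>j\<in>set (map (\<lambda>j. j - 1) ixs). j < length w"
        using P2 pos by auto
      have e: "map ((!) (a#w)) ixs = map ((!) w) (map (\<lambda>j. j - 1) ixs)"
        using pos by (auto simp: nth_Cons')
      have "subseq (map ((!) (a#w)) ixs) w" unfolding e by (rule IH[OF s b])
      then show ?thesis by (simp add: list_emb_Cons)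
    qed
  qed
qed

lemma ED_adversary:
  fixes cx r :: "bool list" and \<pi> :: "nat \<Rightarrow> nat" and m E :: nat
  assumes lc: "length cx = m" and lr: "length r = m"
    and mono: "\<And>a b. a < b \<Longrightarrow> b < m \<Longrightarrow> \<pi> a < \<pi> b"
    and ge: "\<And>p. p < m \<Longrightarrow> p \<le> \<pi> p"
    and top: "\<And>p. p < m \<Longrightarrow> \<pi> p \<le> p + E"
    and Em: "E \<le> m"
  shows "ED cx (map (\<lambda>p. (cx @ r) ! \<pi> p) [0..<m]) \<le> 2 * E"
proof -
  define p0 where "p0 = card {p. p < m \<and> \<pi> p < m}"
  have set_eq: "{p. p < m \<and> \<pi> p < m} = {..<p0}"
  proof -
    have down: "\<And>a b. b \<in> {p. p < m \<and> \<pi> p < m} \<Longrightarrow> a < b \<Longrightarrow> a \<in> {p. p < m \<and> \<pi> p < m}"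
      using mono by (auto, meson less_trans)
    show ?thesis
    proof (cases "{p. p < m \<and> \<pi> p < m} = {}")
      case True then show ?thesis unfolding p0_def by (metis card.empty lessThan_0)
    next
      case False
      define b where "b = Max {p. p < m \<and> \<pi> p < m}"
      have fin: "finite {p. p < m \<and> \<pi> p < m}" by simp
      have bin: "b \<in> {p. p < m \<and> \<pi> p < m}" using Max_in[OF fin False] b_def by simp
      have "{p. p < m \<and> \<pi> p < m} = {..b}"
      proof
        show "{p. p < m \<and> \<pi> p < m} \<subseteq> {..b}" using Max_ge[OF fin] b_def by auto
        show "{..b} \<subseteq> {p. p < m \<and> \<pi> p < m}" using down[OF bin] bin
          by (auto simp: le_less)
      qed
      then show ?thesis unfolding p0_def by (simp add: lessThan_Suc_atMost[symmetric])
    qed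
  qed
  have p0m: "p0 \<le> m" unfolding p0_def by (rule order_trans[OF card_mono[of "{..<m}"]]) auto
  have low: "\<And>p. p < p0 \<Longrightarrow> \<pi> p < m" using set_eq by blast
  have high: "\<And>p. p0 \<le> p \<Longrightarrow> p < m \<Longrightarrow> m \<le> \<pi> p" using set_eq
    by (metis (mono_tags, lifting) lessThan_iff mem_Collect_eq not_le)
  have mono2: "\<And>a b. a \<le> b \<Longrightarrow> b < m \<Longrightarrow> \<pi> a + (b - a) \<le> \<pi> b"
  proof -
    fix a b assume "a \<le> b" "b < m"
    then show "\<pi> a + (b - a) \<le> \<pi> b"
    proof (induction b)
      case 0 then show ?case by simp
    next
      case (Suc b)
      show ?case
      proof (cases "a = Suc b")
        case True then show ?thesis by simp
      next
        case False
        then have "a \<le> b" using Suc.prems by simp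
        then have "\<pi> a + (b - a) \<le> \<pi> b" using Suc by simp
        moreover have "\<pi> b < \<pi> (Suc b)" using mono Suc.prems by simp
        ultimately show ?thesis using \<open>a \<le> b\<close> by linarith
      qed
    qed
  qed
  have gap: "m - p0 \<le> E"
  proof (cases "p0 = m")
    case True then show ?thesis by simp
  next
    case False
    then have "p0 < m" using p0m by simp
    have "\<pi> p0 + (m - 1 - p0) \<le> \<pi> (m - 1)" using mono2[of p0 "m-1"] \<open>p0 < m\<close> by simp
    moreover have "m \<le> \<pi> p0" using high \<open>p0 < m\<close> by simp
    moreover have "\<pi> (m - 1) \<le> m - 1 + E" using top[of "m-1"] \<open>p0 < m\<close> by linarith
    ultimately show ?thesis using \<open>p0 < m\<close> by linarith
  qed
  define z where "z = map (\<lambda>p. cx ! \<pi> p) [0..<p0]"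
  define rest where "rest = map (\<lambda>p. (cx @ r) ! \<pi> p) [p0..<m]"
  have yeq: "map (\<lambda>p. (cx @ r) ! \<pi> p) [0..<m] = z @ rest"
  proof -
    have "[0..<m] = [0..<p0] @ [p0..<m]" using p0m by (metis le0 upt_add_eq_append add_diff_inverse_nat less_imp_le_nat not_less)
    moreover have "map (\<lambda>p. (cx @ r) ! \<pi> p) [0..<p0] = z"
      unfolding z_def using low lc by (auto simp: nth_append)
    ultimately show ?thesis unfolding rest_def by simp
  qed
  have zsub: "subseq z cx"
  proof -
    have "z = map ((!) cx) (map \<pi> [0..<p0])" unfolding z_def by simp
    moreover have "sorted_wrt (<) (map \<pi> [0..<p0])"
      using mono p0m by (auto simp: sorted_wrt_map sorted_wrt_iff_nth_less)
    moreover have "\<forall>i\<in>set (map \<pi> [0..<p0]). i < length cx" using low lc by auto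
    ultimately show ?thesis using subseq_sel[of "map \<pi> [0..<p0]" cx] by (simp only:)
  qed
  have "(insdel_step ^^ (length cx - length z)) cx z" by (rule subseq_path[OF zsub])
  moreover have "(insdel_step ^^ (length rest)) z (z @ rest)" by (rule append_path)
  ultimately have "(insdel_step ^^ ((length cx - length z) + length rest)) cx (z @ rest)"
    by (metis relpowp_add relcompp.relcompI)
  moreover have "(length cx - length z) + length rest \<le> 2 * E"
    unfolding z_def rest_def using lc gap by simp
  ultimately show ?thesis using yeq ED_le by (metis le_trans)
qed


lemma lists_nth_eq:
  "{ds. length ds = Suc k \<and> (\<forall>l<Suc k. ds!l \<in> F l)} =
   (\<lambda>(d,ds). d # ds) ` (F 0 \<times> {ds. length ds = k \<and> (\<forall>l<k. ds!l \<in> F (Suc l))})"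
proof (intro set_eqI iffI)
  fix ds assume a: "ds \<in> {ds. length ds = Suc k \<and> (\<forall>l<Suc k. ds!l \<in> F l)}"
  then obtain d ds' where e: "ds = d # ds'" by (cases ds) auto
  have "length ds' = k" "d \<in> F 0" using a e by auto
  moreover have "\<forall>l<k. ds'!l \<in> F (Suc l)"
  proof (intro allI impI)
    fix l assume "l < k"
    then have "ds ! Suc l \<in> F (Suc l)" using a by simp
    then show "ds'!l \<in> F (Suc l)" using e by simp
  qed
  ultimately have "(d, ds') \<in> F 0 \<times> {ds. length ds = k \<and> (\<forall>l<k. ds!l \<in> F (Suc l))}" by simp
  then show "ds \<in> (\<lambda>(d,ds). d # ds) ` (F 0 \<times> {ds. length ds = k \<and> (\<forall>l<k. ds!l \<in> F (Suc l))})"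
    using e by (simp add: image_iff)
next
  fix ds assume "ds \<in> (\<lambda>(d,ds). d # ds) ` (F 0 \<times> {ds. length ds = k \<and> (\<forall>l<k. ds!l \<in> F (Suc l))})"
  then obtain d ds' where e: "ds = d # ds'" "d \<in> F 0" "length ds' = k" "\<forall>l<k. ds'!l \<in> F (Suc l)"
    by auto
  have "\<forall>l<Suc k. ds!l \<in> F l"
  proof (intro allI impI)
    fix l assume "l < Suc k"
    then show "ds ! l \<in> F l" using e by (cases l) auto
  qed
  then show "ds \<in> {ds. length ds = Suc k \<and> (\<forall>l<Suc k. ds!l \<in> F l)}" using e by simp
qed

lemma card_lists_nth:
  assumes "\<And>l. l < k \<Longrightarrow> finite (F l)"
  shows "finite {ds. length ds = k \<and> (\<forall>l<k. ds!l \<in> F l)} \<and>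
         card {ds. length ds = k \<and> (\<forall>l<k. ds!l \<in> F l)} = (\<Prod>l<k. card (F l))"
  using assms
proof (induction k arbitrary: F)
  case 0 then show ?case by simp
next
  case (Suc k)
  have IH: "finite {ds. length ds = k \<and> (\<forall>l<k. ds!l \<in> F (Suc l))} \<and>
         card {ds. length ds = k \<and> (\<forall>l<k. ds!l \<in> F (Suc l))} = (\<Prod>l<k. card (F (Suc l)))"
    using Suc.IH[of "\<lambda>l. F (Suc l)"] Suc.prems by simp
  have inj: "inj_on (\<lambda>(d,ds). d # ds) (F 0 \<times> {ds. length ds = k \<and> (\<forall>l<k. ds!l \<in> F (Suc l))})"
    by (auto simp: inj_on_def)
  have f0: "finite (F 0)" using Suc.prems by simp
  show ?case unfolding lists_nth_eq
    using IH f0 inj by (simp add: card_image card_cartesian_product prod.lessThan_Suc_shift del: prod.lessThan_Suc)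
qed

lemma div_real_le: "real (a div m) \<le> real a / real m"
  using floor_divide_of_nat_eq[of a m] by (metis of_int_floor_le of_int_of_nat_eq)

lemma div_real_gt: "real a / real m < real (a div m) + 1"
  using floor_divide_of_nat_eq[of a m] by (metis real_of_int_floor_add_one_gt of_int_of_nat_eq)

lemma lt_div_succ: "0 < k \<Longrightarrow> x < (x div k + 1) * (k::nat)"
  using dividend_less_times_div[of k x] by (simp add: algebra_simps)

lemma card_mult_div_le:
  fixes x y k :: nat
  assumes "0 < k" "x \<le> y"
  shows "real (card {b. x < b * k \<and> b * k \<le> y}) \<le> real (y - x) / k + 1"
proof -
  have eq: "{b. x < b * k \<and> b * k \<le> y} = {x div k + 1 .. y div k}"
  proof (intro set_eqI iffI)
    fix b assume "b \<in> {b. x < b * k \<and> b * k \<le> y}"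
    then have "x < b * k" "b * k \<le> y" by auto
    then have "x div k < b" "b \<le> y div k" using assms
      by (simp_all add: div_less_iff_less_mult less_eq_div_iff_mult_less_eq)
    then show "b \<in> {x div k + 1 .. y div k}" by simp
  next
    fix b assume "b \<in> {x div k + 1 .. y div k}"
    then have "x div k < b" "b \<le> y div k" by auto
    then have "x < b * k" "b * k \<le> y" using assms
      by (simp_all add: div_less_iff_less_mult less_eq_div_iff_mult_less_eq)
    then show "b \<in> {b. x < b * k \<and> b * k \<le> y}" by simp
  qed
  have "card {b. x < b * k \<and> b * k \<le> y} = y div k - x div k" unfolding eq by simp
  moreover have "real (y div k - x div k) \<le> real (y - x) / k + 1"
  proof -
    have "y div k * k \<le> y" by simp
    then have a: "real (y div k) * k \<le> y" by (simp only: of_nat_mult[symmetric] of_nat_le_iff)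
    have b: "real x < (real (x div k) + 1) * k"
    proof -
      have "x < (x div k + 1) * k" using assms(1) by (rule lt_div_succ)
      then have "real x < real ((x div k + 1) * k)" by (simp only: of_nat_less_iff)
      then show ?thesis by (simp add: algebra_simps)
    qed
    have "x div k \<le> y div k" using assms by (simp add: div_le_mono)
    then have "real (y div k - x div k) = real (y div k) - real (x div k)" by simp
    moreover have "(real (y div k) - real (x div k)) * k \<le> real (y - x) + k"
      using a b assms by (simp add: algebra_simps)
    ultimately show ?thesis using assms by (simp add: field_simps)
  qed
  ultimately show ?thesis by simp
qed

lemma card_blocks_le:
  fixes k m :: nat
  assumes "0 < k"
  shows "card {b. 1 \<le> b \<and> b * k < m} * k \<le> m"
proof -
  have sub: "{b. 1 \<le> b \<and> b * k < m} \<subseteq> {1 .. (m - 1) div k}"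
  proof
    fix b assume "b \<in> {b. 1 \<le> b \<and> b * k < m}"
    then have "1 \<le> b" "b * k \<le> m - 1" by auto
    then show "b \<in> {1 .. (m - 1) div k}" using assms by (simp add: less_eq_div_iff_mult_less_eq)
  qed
  have "card {b. 1 \<le> b \<and> b * k < m} \<le> (m - 1) div k"
    using card_mono[OF _ sub] by simp
  then have "card {b. 1 \<le> b \<and> b * k < m} * k \<le> (m - 1) div k * k" by simp
  also have "\<dots> \<le> m - 1" by simp
  finally show ?thesis by simp
qed

lemma floor_diff_count:
  fixes x y m R :: nat and W :: nat
  assumes "x < y" "0 < m"
  shows "real (card {r. r < R \<and> (r * y) div m - (r * x) div m = W}) \<le> 2 * real m / real (y - x) + 1"
proof -
  define S where "S = {r. r < R \<and> (r * y) div m - (r * x) div m = W}"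
  define g where "g = y - x"
  have gpos: "0 < g" using assms g_def by simp
  have bnds: "real r * g / m - 1 < real ((r * y) div m - (r * x) div m) \<and>
              real ((r * y) div m - (r * x) div m) < real r * g / m + 1" for r
  proof -
    have le: "(r * x) div m \<le> (r * y) div m" using assms by (simp add: div_le_mono)
    have a1: "real ((r*y) div m) \<le> real (r*y) / m" by (rule div_real_le)
    have a2: "real (r*y) / m < real ((r*y) div m) + 1" by (rule div_real_gt)
    have b1: "real ((r*x) div m) \<le> real (r*x) / m" by (rule div_real_le)
    have b2: "real (r*x) / m < real ((r*x) div m) + 1" by (rule div_real_gt)
    have e: "real r * g / m = real (r*y) / m - real (r*x) / m"
      using assms unfolding g_def by (simp add: of_nat_diff diff_divide_distrib algebra_simps)
    show ?thesis using le a1 a2 b1 b2 e by (simp add: of_nat_diff)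
  qed
  show ?thesis
  proof (cases "S = {}")
    case True then show ?thesis unfolding S_def[symmetric] by simp
  next
    case False
    have fin: "finite S" unfolding S_def by simp
    define r0 where "r0 = Min S"
    have r0S: "r0 \<in> S" using Min_in[OF fin False] r0_def by simp
    have close: "real (r - r0) < 2 * real m / g" if "r \<in> S" for r
    proof -
      have "r0 \<le> r" using Min_le[OF fin that] r0_def by simp
      have "real r * g / m - 1 < W" using bnds[of r] that unfolding S_def by simp
      moreover have "W < real r0 * g / m + 1" using bnds[of r0] r0S unfolding S_def by simp
      ultimately have "real r * g / m - real r0 * g / m < 2" by linarith
      moreover have "(real r - real r0) * g / m = real r * g / m - real r0 * g / m"
        by (simp add: algebra_simps diff_divide_distrib)
      ultimately have "(real r - real r0) * g / m < 2" by linarith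
      then have "(real r - real r0) * g < 2 * m" using assms by (simp add: field_simps)
      then show ?thesis using gpos \<open>r0 \<le> r\<close> by (simp add: field_simps of_nat_diff)
    qed
    define N where "N = nat \<lceil>2 * real m / g\<rceil>"
    have "S \<subseteq> {r0 ..< r0 + N}"
    proof
      fix r assume "r \<in> S"
      then have "r0 \<le> r" using Min_le[OF fin] r0_def by simp
      moreover have "r - r0 < N" using close[OF \<open>r \<in> S\<close>] unfolding N_def by linarith
      ultimately show "r \<in> {r0 ..< r0 + N}" by simp
    qed
    then have cS: "card S \<le> N" using card_mono[of "{r0 ..< r0 + N}" S] by simp
    have rN: "real N \<le> 2 * real m / g + 1"
    proof -
      have "0 \<le> 2 * real m / g" by simp
      then have "0 \<le> \<lceil>2 * real m / g\<rceil>" by linarith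
      then have "real N = real_of_int \<lceil>2 * real m / g\<rceil>" unfolding N_def by simp
      also have "\<dots> \<le> 2 * real m / g + 1" by (rule of_int_ceiling_le_add_one)
      finally show ?thesis .
    qed
    have "real (card S) \<le> real N" using cS by simp
    then have "real (card S) \<le> 2 * real m / g + 1" using rN by linarith
    then show ?thesis unfolding S_def g_def .
  qed
qed

lemma card_fiber_le:
  fixes A :: "'a set" and f :: "'a \<Rightarrow> 'b" and N :: real
  assumes "finite A" "\<And>y. y \<in> f ` A \<Longrightarrow> real (card {a\<in>A. f a = y}) \<le> N"
  shows "real (card A) \<le> N * card (f ` A)"
proof -
  have "A = (\<Union>y\<in>f ` A. {a\<in>A. f a = y})" by auto
  then have "card A \<le> (\<Sum>y\<in>f ` A. card {a\<in>A. f a = y})"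
    by (metis card_UN_le finite_imageI assms(1))
  then have "real (card A) \<le> (\<Sum>y\<in>f ` A. real (card {a\<in>A. f a = y}))"
    by (metis of_nat_le_iff of_nat_sum)
  also have "\<dots> \<le> (\<Sum>y\<in>f ` A. N)" by (rule sum_mono) (use assms(2) in auto)
  finally show ?thesis by (simp add: mult.commute)
qed


definition bnd :: "nat \<times> nat \<Rightarrow> nat" where "bnd z = snd z * 2 ^ fst z"
definition Blk :: "nat \<Rightarrow> (nat \<times> nat) set" where
  "Blk m = {z. 1 \<le> snd z \<and> bnd z < m}"
definition hh :: "nat \<Rightarrow> nat \<Rightarrow> nat" where "hh H s = 2 ^ s div H"
definition Fy :: "nat \<Rightarrow> nat \<times> nat \<Rightarrow> nat set" where
  "Fy H z = {hh H (fst z) .. 2 * hh H (fst z)}"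
definition Om :: "nat \<Rightarrow> nat \<Rightarrow> nat \<Rightarrow> nat \<Rightarrow> (nat \<times> nat \<times> (nat \<times> nat \<Rightarrow> nat)) set" where
  "Om m U R H = {..<U} \<times> {..<R} \<times> PiE (Blk m) (Fy H)"
definition ee :: "nat \<Rightarrow> nat \<times> nat \<times> (nat \<times> nat \<Rightarrow> nat) \<Rightarrow> nat \<Rightarrow> nat" where
  "ee m \<omega> p = fst \<omega> + (fst (snd \<omega>) * p) div m + sum (snd (snd \<omega>)) {z\<in>Blk m. bnd z \<le> p}"
definition pp :: "nat \<Rightarrow> nat \<times> nat \<times> (nat \<times> nat \<Rightarrow> nat) \<Rightarrow> nat \<Rightarrow> nat" where
  "pp m \<omega> p = p + ee m \<omega> p"
definition Bl :: "nat \<Rightarrow> nat \<Rightarrow> nat \<Rightarrow> (nat \<times> nat) set" where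
  "Bl m x y = {z\<in>Blk m. x < bnd z \<and> bnd z \<le> y}"

lemma Blk_sub: "Blk m \<subseteq> {..<m} \<times> {..<m}"
proof
  fix z assume "z \<in> Blk m"
  then have b: "1 \<le> snd z" "snd z * 2 ^ fst z < m" unfolding Blk_def bnd_def by auto
  have "fst z < 2 ^ fst z" by simp
  also have "2 ^ fst z \<le> snd z * 2 ^ fst z" using b(1) by simp
  finally have "fst z < m" using b(2) by linarith
  moreover have "snd z \<le> snd z * 2 ^ fst z" by simp
  then have "snd z < m" using b(2) by linarith
  ultimately show "z \<in> {..<m} \<times> {..<m}" by (cases z) auto
qed

lemma finite_Blk: "finite (Blk m)"
  using Blk_sub finite_subset by blast

lemma finite_Bl: "finite (Bl m x y)"
  unfolding Bl_def using finite_Blk by simp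

lemma div_diff_le: "(r * y) div m - (r * x) div m \<le> (r * (y - x)) div m + 1" if "x \<le> y" for r x y m :: nat
proof -
  have e: "r * y = r * x + r * (y - x)" using that by (simp add: diff_mult_distrib2)
  have d: "(r*x + r*(y-x)) div m = (r*x) div m + (r*(y-x)) div m + ((r*x) mod m + (r*(y-x)) mod m) div m"
    by (rule div_add1_eq)
  have "((r*x) mod m + (r*(y-x)) mod m) div m \<le> 1"
  proof (cases "m = 0")
    case True then show ?thesis by simp
  next
    case False
    then have "(r*x) mod m < m" "(r*(y-x)) mod m < m" by simp_all
    then have "(r*x) mod m + (r*(y-x)) mod m < 2 * m" by linarith
    then have "((r*x) mod m + (r*(y-x)) mod m) div m < 2" by (simp add: less_mult_imp_div_less)
    then show ?thesis by simp
  qed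
  then show ?thesis using d e by simp
qed

lemma ee_diff:
  assumes "x \<le> y"
  shows "ee m \<omega> y = ee m \<omega> x + ((fst (snd \<omega>) * y) div m - (fst (snd \<omega>) * x) div m)
          + sum (snd (snd \<omega>)) (Bl m x y)"
proof -
  obtain u r Y where w: "\<omega> = (u, r, Y)" by (cases \<omega>) auto
  have sp: "{z\<in>Blk m. bnd z \<le> y} = {z\<in>Blk m. bnd z \<le> x} \<union> Bl m x y"
    using assms unfolding Bl_def by auto
  have dj: "{z\<in>Blk m. bnd z \<le> x} \<inter> Bl m x y = {}" unfolding Bl_def by auto
  have "sum Y {z\<in>Blk m. bnd z \<le> y} = sum Y {z\<in>Blk m. bnd z \<le> x} + sum Y (Bl m x y)"
    unfolding sp by (rule sum.union_disjoint) (use finite_Blk finite_Bl dj in auto)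
  moreover have "(r * x) div m \<le> (r * y) div m" using assms by (simp add: div_le_mono)
  ultimately show ?thesis unfolding ee_def w fst_conv snd_conv by linarith
qed

lemma ee_mono: "x \<le> y \<Longrightarrow> ee m \<omega> x \<le> ee m \<omega> y"
  using ee_diff[of x y m \<omega>] by simp

lemma pp_mono: "x < y \<Longrightarrow> pp m \<omega> x < pp m \<omega> y"
  unfolding pp_def using ee_mono[of x y m \<omega>] by simp

lemma pp_diff:
  assumes "x \<le> y"
  shows "pp m \<omega> y - pp m \<omega> x = (y - x) + ((fst (snd \<omega>) * y) div m - (fst (snd \<omega>) * x) div m)
          + sum (snd (snd \<omega>)) (Bl m x y)"
  unfolding pp_def using ee_diff[OF assms, of m \<omega>] assms by simp


lemma card_Fy: "card (Fy H z) = hh H (fst z) + 1"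
  unfolding Fy_def by simp

lemma finite_Fy: "finite (Fy H z)" unfolding Fy_def by simp

lemma card_Om: "card (Om m U R H) = U * R * (\<Prod>z\<in>Blk m. card (Fy H z))"
  unfolding Om_def by (simp add: card_cartesian_product card_PiE finite_Blk)

lemma card_PiE_split:
  assumes "Z \<subseteq> Blk m"
  shows "(\<Prod>z\<in>Blk m. card (Fy H z)) = card (PiE (Blk m - Z) (Fy H)) * (\<Prod>z\<in>Z. card (Fy H z))"
proof -
  have "finite (Blk m)" by (rule finite_Blk)
  then have "(\<Prod>z\<in>Blk m. card (Fy H z)) = (\<Prod>z\<in>Blk m - Z. card (Fy H z)) * (\<Prod>z\<in>Z. card (Fy H z))"
    using assms by (metis prod.subset_diff)
  moreover have "card (PiE (Blk m - Z) (Fy H)) = (\<Prod>z\<in>Blk m - Z. card (Fy H z))"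
    using finite_Blk by (simp add: card_PiE)
  ultimately show ?thesis by simp
qed

locale gapst =
  fixes m U R H :: nat and a :: "nat list" and k :: nat
  assumes len: "length a = Suc k" and kpos: "1 \<le> k"
    and srt: "sorted_wrt (<) a" and lt: "\<forall>x\<in>set a. x < m"
    and Hpos: "0 < H"
begin

definition B :: "nat \<Rightarrow> (nat \<times> nat) set" where "B l = Bl m (a!l) (a!Suc l)"
definition g :: "nat \<Rightarrow> nat" where "g l = a!Suc l - a!l"
definition zz :: "nat \<Rightarrow> nat \<times> nat" where
  "zz l = (SOME z. z \<in> B l \<and> (\<forall>z'\<in>B l. fst z' \<le> fst z))"
definition MM :: "nat \<Rightarrow> nat" where "MM l = (\<Sum>z\<in>B l. hh H (fst z))"
definition fl :: "nat \<Rightarrow> nat \<Rightarrow> nat" where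
  "fl r l = (r * a!Suc l) div m - (r * a!l) div m"
definition d :: "nat \<times> nat \<times> (nat \<times> nat \<Rightarrow> nat) \<Rightarrow> nat \<Rightarrow> nat" where
  "d \<omega> l = pp m \<omega> (a!Suc l) - pp m \<omega> (a!l)"
definition tup :: "nat \<times> nat \<times> (nat \<times> nat \<Rightarrow> nat) \<Rightarrow> nat \<times> nat list" where
  "tup \<omega> = (pp m \<omega> (a!0), map (d \<omega>) [0..<k])"

lemma a_lt: "l < k \<Longrightarrow> a!l < a!Suc l"
  using srt len by (simp add: sorted_wrt_iff_nth_less)

lemma a_mono: "i < j \<Longrightarrow> j \<le> k \<Longrightarrow> a!i < a!j"
  using srt len by (simp add: sorted_wrt_iff_nth_less)

lemma a_m: "i \<le> k \<Longrightarrow> a!i < m"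
  using lt len by (simp add: nth_mem)

lemma g_pos: "l < k \<Longrightarrow> 0 < g l"
  unfolding g_def using a_lt by simp

lemma B_disj: "l < k \<Longrightarrow> l' < k \<Longrightarrow> l \<noteq> l' \<Longrightarrow> B l \<inter> B l' = {}"
proof -
  assume h: "l < k" "l' < k" "l \<noteq> l'"
  show ?thesis
  proof (cases "l < l'")
    case True
    then have "a!Suc l \<le> a!l'"
      using a_mono[of "Suc l" l'] h by (cases "Suc l = l'") auto
    then show ?thesis unfolding B_def Bl_def by auto
  next
    case False
    then have "l' < l" using h by simp
    then have "a!Suc l' \<le> a!l"
      using a_mono[of "Suc l'" l] h by (cases "Suc l' = l") auto
    then show ?thesis unfolding B_def Bl_def by auto
  qed
qed

lemma B_sub: "B l \<subseteq> Blk m" unfolding B_def Bl_def by auto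

lemma finite_B: "finite (B l)" unfolding B_def by (rule finite_Bl)

lemma big_block:
  assumes "l < k"
  shows "\<exists>z\<in>B l. g l < 2 * 2 ^ fst z"
proof -
  define s where "s = (LEAST s. g l < 2 ^ Suc s)"
  have ex: "\<exists>s. g l < 2 ^ Suc s" by (metis less_exp power_Suc2 less_trans_Suc mult_2_right
      trans_less_add2 lessI)
  have s1: "g l < 2 ^ Suc s" unfolding s_def using LeastI_ex[OF ex] .
  have s2: "2 ^ s \<le> g l"
  proof (cases s)
    case 0 then show ?thesis using g_pos[OF assms] by simp
  next
    case (Suc s')
    have "\<not> g l < 2 ^ Suc s'" using not_less_Least[of s' "\<lambda>s. g l < 2 ^ Suc s"] Suc s_def by simp
    then show ?thesis using Suc by simp
  qed
  define b where "b = a!l div 2^s + 1"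
  have "a!l < b * 2^s" unfolding b_def by (rule lt_div_succ) simp
  moreover have "b * 2^s \<le> a!l + 2^s" unfolding b_def by (simp add: algebra_simps)
  ultimately have bz: "a!l < bnd (s,b)" "bnd (s,b) \<le> a!Suc l"
    using s2 unfolding bnd_def g_def by auto
  moreover have "bnd (s,b) < m" using bz a_m[of "Suc l"] assms by simp
  moreover have "1 \<le> b" unfolding b_def by simp
  ultimately have "(s,b) \<in> B l" unfolding B_def Bl_def Blk_def by simp
  moreover have "g l < 2 * 2 ^ s" using s1 by simp
  ultimately show ?thesis by force
qed

lemma zz_prop:
  assumes "l < k"
  shows "zz l \<in> B l" "\<And>z'. z' \<in> B l \<Longrightarrow> fst z' \<le> fst (zz l)" "g l < 2 * 2 ^ fst (zz l)"
proof -
  have ne: "B l \<noteq> {}" using big_block[OF assms] by auto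
  define S where "S = Max (fst ` B l)"
  have "S \<in> fst ` B l" unfolding S_def using ne finite_B by simp
  then obtain z where z: "z \<in> B l" "fst z = S" by auto
  have "\<forall>z'\<in>B l. fst z' \<le> fst z" using z finite_B S_def by simp
  then have ex: "\<exists>z. z \<in> B l \<and> (\<forall>z'\<in>B l. fst z' \<le> fst z)" using z by blast
  have P: "zz l \<in> B l \<and> (\<forall>z'\<in>B l. fst z' \<le> fst (zz l))"
    unfolding zz_def by (rule someI_ex[OF ex])
  then show "zz l \<in> B l" "\<And>z'. z' \<in> B l \<Longrightarrow> fst z' \<le> fst (zz l)" by auto
  obtain z0 where "z0 \<in> B l" "g l < 2 * 2 ^ fst z0" using big_block[OF assms] by blast
  moreover have "fst z0 \<le> fst (zz l)" using P \<open>z0 \<in> B l\<close> by simp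
  ultimately show "g l < 2 * 2 ^ fst (zz l)"
    by (meson less_le_trans mult_le_mono2 power_increasing_iff one_less_numeral_iff semiring_norm(76))
qed

lemma zz_inj: "inj_on zz {..<k}"
proof (rule inj_onI)
  fix l l' assume "l \<in> {..<k}" "l' \<in> {..<k}" "zz l = zz l'"
  then show "l = l'" using B_disj[of l l'] zz_prop(1)[of l] zz_prop(1)[of l'] by auto
qed

lemma d_formula:
  assumes "l < k"
  shows "d \<omega> l = g l + fl (fst (snd \<omega>)) l + sum (snd (snd \<omega>)) (B l)"
  unfolding d_def g_def fl_def B_def using pp_diff[of "a!l" "a!Suc l" m \<omega>] a_lt[OF assms] by simp

definition Ap :: "nat \<times> nat list \<Rightarrow> (nat \<times> nat \<times> (nat \<times> nat \<Rightarrow> nat)) set" where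
  "Ap p = {\<omega>\<in>Om m U R H. tup \<omega> = p}"

lemma agree:
  assumes w: "\<omega> \<in> Om m U R H" "\<omega>' \<in> Om m U R H" and t: "tup \<omega> = tup \<omega>'"
    and r: "fst (snd \<omega>) = fst (snd \<omega>')" and L: "L \<subseteq> {..<k}"
    and out: "\<forall>z\<in>Blk m - zz ` L. snd (snd \<omega>) z = snd (snd \<omega>') z"
  shows "\<omega> = \<omega>'"
proof -
  obtain u rr Y where o1: "\<omega> = (u, rr, Y)" by (cases \<omega>) auto
  obtain u' rr' Y' where o2: "\<omega>' = (u', rr', Y')" by (cases \<omega>') auto
  have rr: "rr' = rr" using r o1 o2 by simp
  have Y1: "Y \<in> PiE (Blk m) (Fy H)" and Y2: "Y' \<in> PiE (Blk m) (Fy H)"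
    using w o1 o2 unfolding Om_def by auto
  have dl: "d \<omega> l = d \<omega>' l" if "l < k" for l
  proof -
    have "map (d \<omega>) [0..<k] = map (d \<omega>') [0..<k]" using t unfolding tup_def by simp
    then show ?thesis using that by (metis (no_types, lifting) map_eq_conv atLeastLessThan_iff set_upt zero_le)
  qed
  have onZ: "Y (zz l) = Y' (zz l)" if "l \<in> L" for l
  proof -
    have lk: "l < k" using L that by auto
    have "sum Y (B l) = sum Y' (B l)"
      using dl[OF lk] d_formula[OF lk, of \<omega>] d_formula[OF lk, of \<omega>'] o1 o2 rr by simp
    moreover have "sum Y (B l) = Y (zz l) + sum Y (B l - {zz l})"
      using sum.remove[OF finite_B zz_prop(1)[OF lk]] by simp
    moreover have "sum Y' (B l) = Y' (zz l) + sum Y' (B l - {zz l})"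
      using sum.remove[OF finite_B zz_prop(1)[OF lk]] by simp
    moreover have "sum Y (B l - {zz l}) = sum Y' (B l - {zz l})"
    proof (rule sum.cong[OF refl])
      fix z assume z: "z \<in> B l - {zz l}"
      have "z \<notin> zz ` L"
      proof
        assume "z \<in> zz ` L"
        then obtain l' where "l' \<in> L" "z = zz l'" by auto
        then have "z \<in> B l'" "l' < k" using zz_prop(1) L by auto
        then have "l' = l" using B_disj[of l l'] z lk by auto
        then show False using z \<open>z = zz l'\<close> by simp
      qed
      moreover have "z \<in> Blk m" using z B_sub by auto
      ultimately show "Y z = Y' z" using out o1 o2 by auto
    qed
    ultimately show ?thesis by simp
  qed
  have YY: "Y = Y'"
  proof (rule PiE_ext[OF Y1 Y2])
    fix z assume "z \<in> Blk m"
    then show "Y z = Y' z" using out onZ o1 o2 by (cases "z \<in> zz ` L") auto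
  qed
  have "pp m \<omega> (a!0) = pp m \<omega>' (a!0)" using t unfolding tup_def by simp
  then have "u = u'" using o1 o2 rr YY unfolding pp_def ee_def by simp
  then show ?thesis using o1 o2 rr YY by simp
qed

lemma finite_Om: "finite (Om m U R H)"
  unfolding Om_def by (simp add: finite_PiE finite_Blk finite_Fy)

lemma Om_parts:
  assumes "\<omega> \<in> Om m U R H"
  shows "fst \<omega> < U" "fst (snd \<omega>) < R" "snd (snd \<omega>) \<in> PiE (Blk m) (Fy H)"
  using assms unfolding Om_def by auto

lemma restrict_in: "Y \<in> PiE (Blk m) (Fy H) \<Longrightarrow> restrict Y (Blk m - Z) \<in> PiE (Blk m - Z) (Fy H)"
  by (auto simp: PiE_iff)

lemma prod_reindex_zz:
  assumes "L \<subseteq> {..<k}"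
  shows "(\<Prod>z\<in>zz ` L. card (Fy H z)) = (\<Prod>l\<in>L. hh H (fst (zz l)) + 1)"
proof -
  have "inj_on zz L" using zz_inj inj_on_subset assms by blast
  then show ?thesis by (simp add: prod.reindex card_Fy)
qed

lemma zzL_sub: "L \<subseteq> {..<k} \<Longrightarrow> zz ` L \<subseteq> Blk m"
  using zz_prop(1) B_sub by blast

lemma point_bound_Y:
  "card (Ap p) * U * (\<Prod>l<k. hh H (fst (zz l)) + 1) \<le> card (Om m U R H)"
proof -
  define Z where "Z = zz ` {..<k}"
  define \<phi> where "\<phi> \<omega> = (fst (snd \<omega>), restrict (snd (snd \<omega>)) (Blk m - Z))" for \<omega> :: "nat \<times> nat \<times> (nat \<times> nat \<Rightarrow> nat)"
  have inj: "inj_on \<phi> (Ap p)"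
  proof (rule inj_onI)
    fix \<omega> \<omega>' assume h: "\<omega> \<in> Ap p" "\<omega>' \<in> Ap p" "\<phi> \<omega> = \<phi> \<omega>'"
    have "\<forall>z\<in>Blk m - Z. snd (snd \<omega>) z = snd (snd \<omega>') z"
    proof
      fix z assume "z \<in> Blk m - Z"
      then show "snd (snd \<omega>) z = snd (snd \<omega>') z"
        using h(3) unfolding \<phi>_def by (metis prod.inject restrict_apply')
    qed
    then show "\<omega> = \<omega>'" using agree[of \<omega> \<omega>' "{..<k}"] h unfolding Ap_def \<phi>_def Z_def by auto
  qed
  have img: "\<phi> ` Ap p \<subseteq> {..<R} \<times> PiE (Blk m - Z) (Fy H)"
  proof
    fix x assume "x \<in> \<phi> ` Ap p"
    then obtain \<omega> where "\<omega> \<in> Om m U R H" "x = \<phi> \<omega>" unfolding Ap_def by auto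
    then show "x \<in> {..<R} \<times> PiE (Blk m - Z) (Fy H)"
      using Om_parts[of \<omega>] restrict_in[of "snd (snd \<omega>)" Z] unfolding \<phi>_def by simp
  qed
  have fin2: "finite ({..<R} \<times> PiE (Blk m - Z) (Fy H))"
    by (simp add: finite_PiE finite_Blk finite_Fy)
  have "card (Ap p) = card (\<phi> ` Ap p)" using card_image[OF inj] by simp
  also have "\<dots> \<le> R * card (PiE (Blk m - Z) (Fy H))"
    using card_mono[OF fin2 img] by (simp add: card_cartesian_product)
  finally have c1: "card (Ap p) \<le> R * card (PiE (Blk m - Z) (Fy H))" .
  have c2: "card (Om m U R H) = U * R * card (PiE (Blk m - Z) (Fy H)) * (\<Prod>l<k. hh H (fst (zz l)) + 1)"
  proof -
    have "(\<Prod>z\<in>Blk m. card (Fy H z)) = card (PiE (Blk m - Z) (Fy H)) * (\<Prod>z\<in>Z. card (Fy H z))"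
      unfolding Z_def by (rule card_PiE_split[OF zzL_sub]) simp
    moreover have "(\<Prod>z\<in>Z. card (Fy H z)) = (\<Prod>l<k. hh H (fst (zz l)) + 1)"
      unfolding Z_def by (rule prod_reindex_zz) simp
    ultimately show ?thesis unfolding card_Om by simp
  qed
  have "card (Ap p) * U * (\<Prod>l<k. hh H (fst (zz l)) + 1) \<le>
        R * card (PiE (Blk m - Z) (Fy H)) * U * (\<Prod>l<k. hh H (fst (zz l)) + 1)"
    using c1 by (intro mult_le_mono1)
  then show ?thesis unfolding c2 by (simp add: ac_simps)
qed

lemma point_bound_rho:
  "real (card (Ap p)) * U * R * (\<Prod>l\<in>{1..<k}. hh H (fst (zz l)) + 1)
     \<le> (2 * real m / real (g 0) + 1) * card (Om m U R H)"
proof -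
  define Z where "Z = zz ` {1..<k}"
  define N where "N = 2 * real m / real (g 0) + 1"
  define \<psi> where "\<psi> \<omega> = restrict (snd (snd \<omega>)) (Blk m - Z)" for \<omega> :: "nat \<times> nat \<times> (nat \<times> nat \<Rightarrow> nat)"
  have k0: "0 < k" using kpos by simp
  have m0: "0 < m" using a_m[of 0] by simp
  have B0: "B 0 \<subseteq> Blk m - Z"
  proof
    fix z assume z: "z \<in> B 0"
    have "z \<notin> Z"
    proof
      assume "z \<in> Z"
      then obtain l where "l \<in> {1..<k}" "z = zz l" unfolding Z_def by auto
      then have "z \<in> B l" "l < k" "l \<noteq> 0" using zz_prop(1) by auto
      then show False using B_disj[of 0 l] z k0 by auto
    qed
    then show "z \<in> Blk m - Z" using z B_sub by auto
  qed
  have finAp: "finite (Ap p)" unfolding Ap_def using finite_Om by simp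
  have fib: "real (card {\<omega>\<in>Ap p. \<psi> \<omega> = y}) \<le> N" if yin: "y \<in> \<psi> ` Ap p" for y
  proof -
    define F where "F = {\<omega>\<in>Ap p. \<psi> \<omega> = y}"
    obtain \<omega>0 where w0': "\<omega>0 \<in> Ap p" "y = \<psi> \<omega>0" using yin by (rule imageE)
    then have w0: "\<omega>0 \<in> Ap p" "\<psi> \<omega>0 = y" by simp_all
    define W where "W = fl (fst (snd \<omega>0)) 0"
    have inj: "inj_on (\<lambda>\<omega>. fst (snd \<omega>)) F"
    proof (rule inj_onI)
      fix \<omega> \<omega>' assume h: "\<omega> \<in> F" "\<omega>' \<in> F" "fst (snd \<omega>) = fst (snd \<omega>')"
      have "\<forall>z\<in>Blk m - Z. snd (snd \<omega>) z = snd (snd \<omega>') z"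
      proof
        fix z assume "z \<in> Blk m - Z"
        moreover have "\<psi> \<omega> = \<psi> \<omega>'" using h unfolding F_def by simp
        ultimately show "snd (snd \<omega>) z = snd (snd \<omega>') z"
          unfolding \<psi>_def by (metis restrict_apply')
      qed
      moreover have "{1..<k} \<subseteq> {..<k}" by auto
      ultimately show "\<omega> = \<omega>'" using agree[of \<omega> \<omega>' "{1..<k}"] h unfolding F_def Ap_def Z_def by auto
    qed
    have img: "(\<lambda>\<omega>. fst (snd \<omega>)) ` F \<subseteq> {r. r < R \<and> (r * a!1) div m - (r * a!0) div m = W}"
    proof
      fix x assume "x \<in> (\<lambda>\<omega>. fst (snd \<omega>)) ` F"
      then obtain \<omega> where w: "\<omega> \<in> F" "x = fst (snd \<omega>)" by auto
      have om: "\<omega> \<in> Om m U R H" using w unfolding F_def Ap_def by simp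
      have "d \<omega> 0 = d \<omega>0 0" using w w0 unfolding F_def Ap_def tup_def using k0 by auto
      moreover have "sum (snd (snd \<omega>)) (B 0) = sum (snd (snd \<omega>0)) (B 0)"
      proof (rule sum.cong[OF refl])
        fix z assume "z \<in> B 0"
        then have "z \<in> Blk m - Z" using B0 by auto
        moreover have "\<psi> \<omega> = \<psi> \<omega>0" using w w0 unfolding F_def by simp
        ultimately show "snd (snd \<omega>) z = snd (snd \<omega>0) z"
          unfolding \<psi>_def by (metis restrict_apply')
      qed
      ultimately have "fl x 0 = W" using d_formula[OF k0, of \<omega>] d_formula[OF k0, of \<omega>0] w unfolding W_def by simp
      moreover have "x < R" using Om_parts(2)[OF om] w by simp
      ultimately show "x \<in> {r. r < R \<and> (r * a!1) div m - (r * a!0) div m = W}" unfolding fl_def by simp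
    qed
    have "card F = card ((\<lambda>\<omega>. fst (snd \<omega>)) ` F)" using card_image[OF inj] by simp
    also have "\<dots> \<le> card {r. r < R \<and> (r * a!1) div m - (r * a!0) div m = W}"
      by (rule card_mono[OF _ img]) simp
    finally have "real (card F) \<le> real (card {r. r < R \<and> (r * a!1) div m - (r * a!0) div m = W})" by simp
    also have "\<dots> \<le> 2 * real m / real (a!1 - a!0) + 1"
      using floor_diff_count[OF _ m0, of "a!0" "a!1" R W] a_lt[OF k0] by simp
    finally show ?thesis unfolding F_def N_def g_def by simp
  qed
  have c1: "real (card (Ap p)) \<le> N * card (\<psi> ` Ap p)" by (rule card_fiber_le[OF finAp fib])
  have img: "\<psi> ` Ap p \<subseteq> PiE (Blk m - Z) (Fy H)"
  proof
    fix x assume "x \<in> \<psi> ` Ap p"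
    then obtain \<omega> where "\<omega> \<in> Om m U R H" "x = \<psi> \<omega>" unfolding Ap_def by auto
    then show "x \<in> PiE (Blk m - Z) (Fy H)"
      using Om_parts[of \<omega>] restrict_in[of "snd (snd \<omega>)" Z] unfolding \<psi>_def by simp
  qed
  have "card (\<psi> ` Ap p) \<le> card (PiE (Blk m - Z) (Fy H))"
    by (rule card_mono[OF _ img]) (simp add: finite_PiE finite_Blk finite_Fy)
  then have c1': "real (card (Ap p)) \<le> N * card (PiE (Blk m - Z) (Fy H))"
    using c1 N_def by (smt (verit) mult_left_mono of_nat_le_iff divide_nonneg_nonneg of_nat_0_le_iff)
  have c2: "card (Om m U R H) = U * R * card (PiE (Blk m - Z) (Fy H)) * (\<Prod>l\<in>{1..<k}. hh H (fst (zz l)) + 1)"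
  proof -
    have "(\<Prod>z\<in>Blk m. card (Fy H z)) = card (PiE (Blk m - Z) (Fy H)) * (\<Prod>z\<in>Z. card (Fy H z))"
      unfolding Z_def by (rule card_PiE_split[OF zzL_sub]) auto
    moreover have "(\<Prod>z\<in>Z. card (Fy H z)) = (\<Prod>l\<in>{1..<k}. hh H (fst (zz l)) + 1)"
      unfolding Z_def by (rule prod_reindex_zz) auto
    ultimately show ?thesis unfolding card_Om by simp
  qed
  define P where "P = (\<Prod>l\<in>{1..<k}. hh H (fst (zz l)) + 1)"
  have "real (card (Ap p)) * U * R * P \<le> N * card (PiE (Blk m - Z) (Fy H)) * U * R * P"
    using c1' by (simp add: mult_right_mono)
  also have "\<dots> = N * card (Om m U R H)" unfolding c2 P_def by (simp add: ac_simps)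
  finally show ?thesis unfolding P_def N_def by simp
qed

end


lemma sum_pow2_le: "(\<Sum>s\<le>S. (2::real) ^ s) \<le> 2 * 2 ^ S"
proof (induction S)
  case 0 then show ?case by simp
next
  case (Suc S) then show ?case by simp
qed

lemma hh_le: "real (hh H s) \<le> 2 ^ s / real H"
  unfolding hh_def using div_real_le[of "2^s" H] by simp

lemma hh_gt: "2 ^ s / real H < real (hh H s) + 1"
  unfolding hh_def using div_real_gt[of "2^s" H] by simp

definition Wset :: "real \<Rightarrow> nat \<Rightarrow> nat set" where
  "Wset c j = {n. c ^ (j - 1) \<le> real n \<and> real n < c ^ j}"

lemma lt_nat_ceil: "real n < x \<Longrightarrow> n < nat \<lceil>x\<rceil>"
proof -
  assume "real n < x"
  then have "of_int (int n) < x" by simp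
  then have "int n < \<lceil>x\<rceil>" by (simp only: less_ceiling_iff)
  then show ?thesis by (simp add: zless_nat_eq_int_zless)
qed

lemma finite_Wset: "finite (Wset c j)"
proof -
  have "Wset c j \<subseteq> {..< nat \<lceil>c ^ j\<rceil>}" unfolding Wset_def by (auto intro: lt_nat_ceil)
  then show ?thesis using finite_subset by blast
qed

lemma Pbox_eq: "Pbox c m js = {..<2*m} \<times> {ds. length ds = length js \<and> (\<forall>l<length js. ds!l \<in> Wset c (js!l))}"
  unfolding Pbox_def Wset_def by auto

lemma card_Pbox: "finite (Pbox c m js) \<and> card (Pbox c m js) = 2 * m * (\<Prod>l<length js. card (Wset c (js!l)))"
proof -
  have "finite {ds. length ds = length js \<and> (\<forall>l<length js. ds!l \<in> Wset c (js!l))} \<and>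
        card {ds. length ds = length js \<and> (\<forall>l<length js. ds!l \<in> Wset c (js!l))} = (\<Prod>l<length js. card (Wset c (js!l)))"
    by (rule card_lists_nth) (rule finite_Wset)
  then show ?thesis unfolding Pbox_eq by (simp add: card_cartesian_product)
qed

lemma card_Wset_le:
  assumes "1 \<le> c"
  shows "real (card (Wset c j)) \<le> c ^ j"
proof -
  define N where "N = nat \<lceil>c ^ j\<rceil>"
  have "Wset c j \<subseteq> {1..<N}"
  proof
    fix n assume "n \<in> Wset c j"
    then have "c ^ (j - 1) \<le> real n" "real n < c ^ j" unfolding Wset_def by auto
    moreover have "1 \<le> c ^ (j - 1)" using assms by simp
    ultimately show "n \<in> {1..<N}" unfolding N_def using lt_nat_ceil[of n "c^j"] by auto
  qed
  then have "card (Wset c j) \<le> N - 1" using card_mono[of "{1..<N}"] by simp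
  moreover have "real N \<le> c ^ j + 1"
  proof -
    have "0 \<le> c ^ j" using assms by simp
    then have "0 \<le> \<lceil>c ^ j\<rceil>" by linarith
    then have "real N = real_of_int \<lceil>c ^ j\<rceil>" unfolding N_def by simp
    also have "\<dots> \<le> c ^ j + 1" by (rule of_int_ceiling_le_add_one)
    finally show ?thesis .
  qed
  moreover have "real (N - 1) \<le> c ^ j"
  proof (cases "N = 0")
    case True then show ?thesis using assms by simp
  next
    case False then have "real (N - 1) = real N - 1" by simp
    then show ?thesis using \<open>real N \<le> c ^ j + 1\<close> by simp
  qed
  ultimately show ?thesis by (meson of_nat_le_iff order_trans)
qed

lemma cpow_le: "1 \<le> c \<Longrightarrow> c ^ (j - 1) \<le> v \<Longrightarrow> c ^ j \<le> c * (v::real)"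
proof (cases j)
  case 0
  assume "1 \<le> c" "c ^ (j - 1) \<le> v"
  then have v1: "1 \<le> v" using 0 by simp
  have "c * 1 \<le> c * v" using v1 \<open>1 \<le> c\<close> by (intro mult_left_mono) simp_all
  then show ?thesis using 0 \<open>1 \<le> c\<close> mult_mono[of 1 c 1 v] by simp
next
  case (Suc j')
  assume "1 \<le> c" "c ^ (j - 1) \<le> v"
  then show ?thesis using Suc by (simp add: mult_left_mono)
qed

locale gapnum = gapst +
  fixes \<delta> c L0 :: real and NS :: nat
  assumes dpos: "0 < \<delta>" and dlt: "\<delta> < 1" and c4: "4 \<le> c" and L01: "1 \<le> L0"
    and NSb: "\<And>s. 2 ^ s < m \<Longrightarrow> s < NS" and NSL: "real NS \<le> L0"
    and Hlo: "8 * L0 / \<delta> \<le> real H" and Hhi: "real H \<le> 9 * L0 / \<delta>"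
    and Ulo: "\<delta> * m / 8 \<le> real U" and Upos: "1 \<le> U"
    and Rlo: "\<delta> * m / 8 \<le> real R" and Rpos: "1 \<le> R" and Rhi: "4 * R \<le> m"
begin

definition AA :: "nat \<Rightarrow> nat" where "AA l = g l + MM l"
definition hz :: "nat \<Rightarrow> nat" where "hz l = hh H (fst (zz l))"

lemma H_ge_L0: "L0 \<le> real H"
proof -
  have "L0 \<le> 8 * L0 / \<delta>" using dpos dlt L01 by (simp add: field_simps)
  then show ?thesis using Hlo by linarith
qed

lemma MM_bound:
  assumes lk: "l < k"
  shows "real (MM l) \<le> (L0 * g l + 2 * 2 ^ fst (zz l)) / real H"
proof -
  define S where "S = fst (zz l)"
  define Bs where "Bs s = {b. a!l < b * 2^s \<and> b * 2^s \<le> a!Suc l}" for s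
  have sub: "B l \<subseteq> Sigma {..S} Bs"
  proof
    fix z assume z: "z \<in> B l"
    then have "fst z \<le> S" using zz_prop(2)[OF lk] S_def by simp
    moreover have "snd z \<in> Bs (fst z)" using z unfolding B_def Bl_def Bs_def bnd_def by auto
    ultimately show "z \<in> Sigma {..S} Bs" by (cases z) auto
  qed
  have finBs: "finite (Bs s)" for s
  proof -
    have "Bs s \<subseteq> {..a!Suc l}" unfolding Bs_def
      by auto (metis le_trans mult_le_mono2 mult.right_neutral one_le_numeral one_le_power)
    then show ?thesis using finite_subset by blast
  qed
  have "real (MM l) = (\<Sum>z\<in>B l. real (hh H (fst z)))" unfolding MM_def by simp
  also have "\<dots> \<le> (\<Sum>z\<in>B l. 2 ^ fst z / real H)" by (rule sum_mono) (rule hh_le)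
  also have "\<dots> \<le> (\<Sum>z\<in>Sigma {..S} Bs. 2 ^ fst z / real H)"
    by (rule sum_mono2[OF _ sub]) (auto simp: finBs)
  also have "\<dots> = (\<Sum>s\<le>S. \<Sum>b\<in>Bs s. 2 ^ s / real H)"
    using sum.Sigma[of "{..S}" Bs "\<lambda>s b. 2^s / real H"] finBs by (simp add: split_def)
  also have "\<dots> = (\<Sum>s\<le>S. real (card (Bs s)) * (2 ^ s / real H))" by simp
  also have "\<dots> \<le> (\<Sum>s\<le>S. (real (g l) / 2 ^ s + 1) * (2 ^ s / real H))"
  proof (rule sum_mono)
    fix s assume "s \<in> {..S}"
    have "real (card (Bs s)) \<le> real (a!Suc l - a!l) / 2 ^ s + 1"
      unfolding Bs_def using card_mult_div_le[of "2^s" "a!l" "a!Suc l"] a_lt[OF lk] by simp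
    then show "real (card (Bs s)) * (2 ^ s / real H) \<le> (real (g l) / 2 ^ s + 1) * (2 ^ s / real H)"
      unfolding g_def by (intro mult_right_mono) auto
  qed
  also have "\<dots> = (\<Sum>s\<le>S. (real (g l) + 2 ^ s) / real H)"
  proof (rule sum.cong[OF refl])
    fix s
    have "(2::real)^s > 0" by simp
    moreover have "real H > 0" using Hpos by simp
    ultimately show "(real (g l) / 2 ^ s + 1) * (2 ^ s / real H) = (real (g l) + 2 ^ s) / real H"
      by (simp add: field_simps)
  qed
  also have "\<dots> = (real (Suc S) * g l + (\<Sum>s\<le>S. 2 ^ s)) / real H"
    by (simp add: sum_divide_distrib[symmetric] sum.distrib)
  also have "\<dots> \<le> (L0 * g l + 2 * 2 ^ S) / real H"
  proof -
    have "2 ^ S \<le> bnd (zz l)" unfolding bnd_def using zz_prop(1)[OF lk] S_def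
      unfolding B_def Bl_def Blk_def by auto
    moreover have "bnd (zz l) < m" using zz_prop(1)[OF lk] unfolding B_def Bl_def Blk_def by auto
    ultimately have "S < NS" using NSb by (meson le_less_trans)
    then have "real (Suc S) \<le> L0" using NSL by linarith
    then have "real (Suc S) * g l \<le> L0 * g l" by (simp add: mult_right_mono)
    moreover have "(\<Sum>s\<le>S. (2::real) ^ s) \<le> 2 * 2 ^ S" by (rule sum_pow2_le)
    ultimately show ?thesis using Hpos by (simp add: divide_right_mono)
  qed
  finally show ?thesis unfolding S_def .
qed

lemma sumY_bounds:
  assumes "\<omega> \<in> Om m U R H"
  shows "MM l \<le> sum (snd (snd \<omega>)) (B l)" "sum (snd (snd \<omega>)) (B l) \<le> 2 * MM l"
proof -
  have Y: "snd (snd \<omega>) \<in> PiE (Blk m) (Fy H)" using Om_parts(3)[OF assms] .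
  have in_F: "z \<in> B l \<Longrightarrow> snd (snd \<omega>) z \<in> Fy H z" for z using Y B_sub by (auto simp: PiE_iff)
  show "MM l \<le> sum (snd (snd \<omega>)) (B l)" unfolding MM_def
    by (rule sum_mono) (use in_F in \<open>auto simp: Fy_def\<close>)
  have "sum (snd (snd \<omega>)) (B l) \<le> (\<Sum>z\<in>B l. 2 * hh H (fst z))"
    by (rule sum_mono) (use in_F in \<open>auto simp: Fy_def\<close>)
  then show "sum (snd (snd \<omega>)) (B l) \<le> 2 * MM l" unfolding MM_def by (simp add: sum_distrib_left)
qed

lemma d_range:
  assumes w: "\<omega> \<in> Om m U R H" and lk: "l < k"
  shows "AA l \<le> d \<omega> l" "real (d \<omega> l) \<le> 3 * real (AA l)"
proof -
  define r where "r = fst (snd \<omega>)"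
  have rR: "r < R" using Om_parts(2)[OF w] r_def by simp
  have df: "d \<omega> l = g l + fl r l + sum (snd (snd \<omega>)) (B l)" using d_formula[OF lk] r_def by simp
  show "AA l \<le> d \<omega> l" unfolding AA_def df using sumY_bounds(1)[OF w, of l] by simp
  have m0: "0 < m" using Rhi Rpos by simp
  have "fl r l \<le> (r * g l) div m + 1" unfolding fl_def g_def
    using div_diff_le[of "a!l" "a!Suc l" r m] a_lt[OF lk] by simp
  moreover have "real ((r * g l) div m) \<le> real (g l) / 4"
  proof -
    have "real ((r * g l) div m) \<le> real (r * g l) / m" by (rule div_real_le)
    also have "\<dots> \<le> real (g l) / 4"
    proof -
      have "real r * 4 \<le> real m" using rR Rhi by linarith
      then have "real r * real (g l) * 4 \<le> real m * real (g l)"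
        by (metis mult.assoc mult.commute mult_right_mono of_nat_0_le_iff)
      then show ?thesis using m0 by (simp add: field_simps)
    qed
    finally show ?thesis .
  qed
  ultimately have fl_b: "real (fl r l) \<le> real (g l) / 4 + 1" by linarith
  have "real (d \<omega> l) = real (g l) + real (fl r l) + real (sum (snd (snd \<omega>)) (B l))" unfolding df by simp
  also have "\<dots> \<le> real (g l) + (real (g l) / 4 + 1) + 2 * real (MM l)"
    using fl_b sumY_bounds(2)[OF w, of l] by linarith
  also have "\<dots> \<le> 3 * real (AA l)" unfolding AA_def using g_pos[OF lk] by simp
  finally show "real (d \<omega> l) \<le> 3 * real (AA l)" .
qed

lemma A_Y_ratio:
  assumes lk: "l < k"
  shows "real (AA l) \<le> 6 * real H * (real (hz l) + 1)"
    and "3 * real (g l) < real (MM l) \<Longrightarrow> real (AA l) < 4 * (real (hz l) + 1)"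
proof -
  define S where "S = fst (zz l)"
  have H0: "0 < real H" using Hpos by simp
  have hb: "2 ^ S / real H < real (hz l) + 1" unfolding hz_def S_def by (rule hh_gt)
  then have hb2: "2 ^ S < real H * (real (hz l) + 1)" using H0 by (simp add: field_simps)
  have gb: "real (g l) < 2 * 2 ^ S" using zz_prop(3)[OF lk] S_def by (metis of_nat_less_iff of_nat_mult of_nat_numeral of_nat_power)
  have Mb: "real (MM l) \<le> (L0 * g l + 2 * 2 ^ S) / real H" using MM_bound[OF lk] S_def by simp
  have "(L0 * g l + 2 * 2 ^ S) / real H \<le> real (g l) + 2 * (2 ^ S / real H)"
  proof -
    have "L0 * g l \<le> real H * g l" using H_ge_L0 by (simp add: mult_right_mono)
    then show ?thesis using H0 by (simp add: field_simps)
  qed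
  then have Mb1: "real (MM l) \<le> real (g l) + 2 * (2 ^ S / real H)" using Mb by (rule order_trans[rotated])
  have Mb2: "real (MM l) \<le> real (g l) + 2 * (real (hz l) + 1)"
  proof -
    define X where "X = 2 ^ S / real H"
    have "2 * X \<le> 2 * (real (hz l) + 1)" using hb unfolding X_def by simp
    then show ?thesis using Mb1 unfolding X_def by simp
  qed
  have "real (AA l) \<le> 2 * real (g l) + 2 * (real (hz l) + 1)" unfolding AA_def using Mb2 by simp
  also have "\<dots> \<le> 4 * (real H * (real (hz l) + 1)) + 2 * (real (hz l) + 1)" using gb hb2 by linarith
  also have "\<dots> \<le> 6 * real H * (real (hz l) + 1)"
  proof -
    have "1 \<le> real H" using Hpos by simp
    then have "(real (hz l) + 1) * 1 \<le> (real (hz l) + 1) * real H" by (intro mult_left_mono) simp_all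
    then show ?thesis by (simp add: algebra_simps)
  qed
  finally show "real (AA l) \<le> 6 * real H * (real (hz l) + 1)" .
  assume "3 * real (g l) < real (MM l)"
  then have "real (g l) < real (hz l) + 1" using Mb2 by (smt (verit))
  then show "real (AA l) < 4 * (real (hz l) + 1)" unfolding AA_def using Mb2 by simp
qed

end


lemma prod_split0: "1 \<le> (k::nat) \<Longrightarrow> (\<Prod>l<k. f l) = f 0 * (\<Prod>l\<in>{1..<k}. f l)"
proof -
  assume "1 \<le> k"
  then have "{..<k} = insert 0 {1..<k}"
  proof (intro set_eqI iffI)
    fix x assume "x \<in> {..<k}"
    then show "x \<in> insert 0 {1..<k}" by (cases x) auto
  next
    fix x assume "x \<in> insert 0 {1..<k}"
    then show "x \<in> {..<k}" using \<open>1 \<le> k\<close> by auto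
  qed
  then show ?thesis by simp
qed

context gapnum
begin

lemma point_Y_real:
  "real (card (Ap p)) * real U * (\<Prod>l<k. real (hz l) + 1) \<le> real (card (Om m U R H))"
proof -
  have "real (card (Ap p) * U * (\<Prod>l<k. hh H (fst (zz l)) + 1)) \<le> real (card (Om m U R H))"
    using point_bound_Y by (simp only: of_nat_le_iff)
  then show ?thesis unfolding hz_def by (simp add: of_nat_prod add.commute)
qed

lemma point_rho_real:
  "real (card (Ap p)) * real U * real R * (\<Prod>l\<in>{1..<k}. real (hz l) + 1)
     \<le> (2 * real m / real (g 0) + 1) * real (card (Om m U R H))"
  using point_bound_rho unfolding hz_def by (simp add: of_nat_prod add.commute)

lemma Yr_bound:
  assumes "l < k"
  shows "3 * c * real (AA l) \<le> (162 * c * L0 / \<delta>) * (real (hz l) + 1)"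
proof -
  have c0: "0 \<le> c" using c4 by simp
  have "3 * c * real (AA l) \<le> 3 * c * (6 * real H * (real (hz l) + 1))"
    using A_Y_ratio(1)[OF assms] c0 by (intro mult_left_mono) simp_all
  also have "\<dots> = (18 * c * real H) * (real (hz l) + 1)" by (simp add: algebra_simps)
  also have "\<dots> \<le> (162 * c * L0 / \<delta>) * (real (hz l) + 1)"
  proof (rule mult_right_mono)
    have "18 * c * real H \<le> 18 * c * (9 * L0 / \<delta>)" using Hhi c0 by (intro mult_left_mono) simp_all
    then show "18 * c * real H \<le> 162 * c * L0 / \<delta>" by simp
  qed simp
  finally show ?thesis .
qed

lemma point_ratio:
  assumes js: "length js = k" and pin: "p \<in> Pbox c m js"
  shows "real (card (Ap p)) * real (card (Pbox c m js))
         \<le> (16 / \<delta>) * (288 * c / \<delta>) * (162 * c * L0 / \<delta>) ^ (k - 1) * real (card (Om m U R H))"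
proof (cases "Ap p = {}")
  case True
  have "0 \<le> (16 / \<delta>) * (288 * c / \<delta>) * (162 * c * L0 / \<delta>) ^ (k - 1) * real (card (Om m U R H))"
    using dpos c4 L01 by simp
  then show ?thesis using True by simp
next
  case False
  then obtain \<omega>0 where w0: "\<omega>0 \<in> Ap p" by blast
  have om0: "\<omega>0 \<in> Om m U R H" and tp: "tup \<omega>0 = p" using w0 unfolding Ap_def by auto
  have c1: "1 \<le> c" using c4 by simp
  have c0: "0 \<le> c" using c4 by simp
  define Yr where "Yr = 162 * c * L0 / \<delta>"
  define T where "T = Yr ^ (k - 1)"
  define X0 where "X0 = 3 * c * real (AA 0)"
  define P1 where "P1 = (\<Prod>l\<in>{1..<k}. real (hz l) + 1)"
  define CA where "CA = real (card (Ap p))"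
  define CO where "CO = real (card (Om m U R H))"
  have k1: "1 \<le> k" using kpos .
  have Yr0: "0 \<le> Yr" unfolding Yr_def using dpos c4 L01 by simp
  have T0: "0 \<le> T" unfolding T_def using Yr0 by simp
  have P10: "0 \<le> P1" unfolding P1_def by (intro prod_nonneg) simp
  have CA0: "0 \<le> CA" unfolding CA_def by simp
  have CO0: "0 \<le> CO" unfolding CO_def by simp
  have X00: "0 \<le> X0" unfolding X0_def using c0 by simp
  have Wl: "real (card (Wset c (js!l))) \<le> 3 * c * real (AA l)" if lk: "l < k" for l
  proof -
    have "snd p ! l = d \<omega>0 l" using tp lk unfolding tup_def by auto
    moreover have "c ^ (js!l - 1) \<le> real (snd p ! l)"
      using pin js lk unfolding Pbox_def by auto
    ultimately have cl: "c ^ (js!l - 1) \<le> real (d \<omega>0 l)" by simp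
    have "real (card (Wset c (js!l))) \<le> c ^ (js!l)" by (rule card_Wset_le[OF c1])
    also have "\<dots> \<le> c * real (d \<omega>0 l)" by (rule cpow_le[OF c1 cl])
    also have "\<dots> \<le> c * (3 * real (AA l))" using d_range(2)[OF om0 lk] c0 by (intro mult_left_mono) simp_all
    finally show ?thesis by simp
  qed
  have Pb: "real (card (Pbox c m js)) \<le> 2 * real m * (X0 * (T * P1))"
  proof -
    have "real (card (Pbox c m js)) = 2 * real m * (\<Prod>l<k. real (card (Wset c (js!l))))"
      using card_Pbox[of c m js] js by (simp add: of_nat_prod)
    also have "\<dots> \<le> 2 * real m * (\<Prod>l<k. 3 * c * real (AA l))"
      by (intro mult_left_mono prod_mono) (use Wl in auto)
    also have "(\<Prod>l<k. 3 * c * real (AA l)) = X0 * (\<Prod>l\<in>{1..<k}. 3 * c * real (AA l))"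
      unfolding X0_def by (rule prod_split0[OF k1])
    also have "(\<Prod>l\<in>{1..<k}. 3 * c * real (AA l)) \<le> (\<Prod>l\<in>{1..<k}. Yr * (real (hz l) + 1))"
      by (rule prod_mono) (use Yr_bound c0 in \<open>auto simp: Yr_def\<close>)
    also have "(\<Prod>l\<in>{1..<k}. Yr * (real (hz l) + 1)) = T * P1"
      unfolding T_def P1_def by (simp add: prod.distrib)
    finally show ?thesis using X00 by (simp add: mult_left_mono)
  qed
  have main: "CA * real (card (Pbox c m js)) \<le> CA * (2 * real m * (X0 * (T * P1)))"
    using Pb CA0 by (intro mult_left_mono) simp_all
  have U0: "0 < real U" using Upos by simp
  have R0: "0 < real R" using Rpos by simp
  have m2U: "2 * real m / real U \<le> 16 / \<delta>"
  proof -
    have "2 * real m \<le> 16 / \<delta> * real U" using Ulo dpos by (simp add: field_simps)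
    then show ?thesis using U0 by (simp add: field_simps)
  qed
  show ?thesis
  proof (cases "3 * real (g 0) < real (MM 0)")
    case True
    have X0b: "X0 \<le> (288 * c / \<delta>) * (real (hz 0) + 1)"
    proof -
      have "X0 < 3 * c * (4 * (real (hz 0) + 1))" unfolding X0_def
        using A_Y_ratio(2)[OF _ True] k1 c4 by (intro mult_strict_left_mono) simp_all
      also have "\<dots> = (12 * c) * (real (hz 0) + 1)" by simp
      also have "\<dots> \<le> (288 * c / \<delta>) * (real (hz 0) + 1)"
      proof (rule mult_right_mono)
        have "12 * c \<le> 288 * c" using c0 by simp
        also have "\<dots> \<le> 288 * c / \<delta>"
        proof -
          have "\<delta> * c \<le> 1 * c" using dlt c0 by (intro mult_right_mono) simp_all
          then show ?thesis using dpos by (simp add: field_simps)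
        qed
        finally show "12 * c \<le> 288 * c / \<delta>" .
      qed simp
      finally show ?thesis by simp
    qed
    have PY: "CA * ((real (hz 0) + 1) * P1) * real U \<le> CO"
      using point_Y_real[of p] prod_split0[OF k1, of "\<lambda>l. real (hz l) + 1"]
      unfolding CA_def CO_def P1_def by (simp add: ac_simps)
    have "CA * (2 * real m * (X0 * (T * P1))) \<le> CA * (2 * real m * ((288 * c / \<delta>) * (real (hz 0) + 1) * (T * P1)))"
      using X0b CA0 T0 P10 by (intro mult_left_mono mult_right_mono) simp_all
    also have "\<dots> = (2 * real m / real U * (288 * c / \<delta>) * T) * (CA * ((real (hz 0) + 1) * P1) * real U)"
    proof -
      have "real U \<noteq> 0" "\<delta> \<noteq> 0" using U0 dpos by auto
      then show ?thesis by (simp add: field_simps)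
    qed
    also have "\<dots> \<le> (2 * real m / real U * (288 * c / \<delta>) * T) * CO"
      using PY dpos c0 T0 U0 by (intro mult_left_mono) simp_all
    also have "\<dots> \<le> ((16 / \<delta>) * (288 * c / \<delta>) * T) * CO"
      using m2U dpos c0 T0 CO0 by (intro mult_right_mono) simp_all
    finally show ?thesis using main unfolding T_def Yr_def CA_def CO_def by simp
  next
    case False
    have g0: "0 < g 0" using g_pos k1 by simp
    have gm: "real (g 0) \<le> real m"
    proof -
      have "g 0 \<le> a!Suc 0" unfolding g_def by simp
      moreover have "a!Suc 0 < m" using a_m k1 by simp
      ultimately show ?thesis by simp
    qed
    have X0b: "X0 \<le> 12 * c * real (g 0)"
      unfolding X0_def AA_def using False c0 by (simp add: algebra_simps mult_left_mono)
    define N where "N = 2 * real m / real (g 0) + 1"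
    have PR: "CA * P1 * (real U * real R) \<le> N * CO"
      using point_rho_real[of p] unfolding CA_def CO_def P1_def N_def by (simp add: ac_simps)
    have key: "12 * c * real (g 0) * N / real R \<le> 288 * c / \<delta>"
    proof -
      have "12 * c * real (g 0) * N = 12 * c * (2 * real m + real (g 0))"
        unfolding N_def using g0 by (simp add: field_simps)
      also have "\<dots> \<le> 12 * c * (3 * real m)" using gm c0 by (intro mult_left_mono) simp_all
      also have "\<dots> = 36 * c * real m" by simp
      finally have a1: "12 * c * real (g 0) * N \<le> 36 * c * real m" .
      have "36 * c * real m \<le> 288 * c / \<delta> * real R"
      proof -
        have "36 * c * real m = 288 * c / \<delta> * (\<delta> * real m / 8)" using dpos by (simp add: field_simps)
        also have "\<dots> \<le> 288 * c / \<delta> * real R" using Rlo dpos c0 by (intro mult_left_mono) simp_all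
        finally show ?thesis .
      qed
      then show ?thesis using a1 R0 by (simp add: field_simps)
    qed
    have "CA * (2 * real m * (X0 * (T * P1))) \<le> CA * (2 * real m * ((12 * c * real (g 0)) * (T * P1)))"
      using X0b CA0 T0 P10 by (intro mult_left_mono mult_right_mono) simp_all
    also have "\<dots> = (2 * real m / real U) * (12 * c * real (g 0) / real R) * T * (CA * P1 * (real U * real R))"
    proof -
      have "real U \<noteq> 0" "real R \<noteq> 0" using U0 R0 by auto
      then show ?thesis by (simp add: field_simps)
    qed
    also have "\<dots> \<le> (2 * real m / real U) * (12 * c * real (g 0) / real R) * T * (N * CO)"
      using PR U0 R0 c0 T0 by (intro mult_left_mono) simp_all
    also have "\<dots> = (2 * real m / real U) * (12 * c * real (g 0) * N / real R) * T * CO"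
      by (simp add: field_simps)
    also have "\<dots> \<le> (16 / \<delta>) * (288 * c / \<delta>) * T * CO"
      using m2U key T0 CO0 dpos c0 U0 R0 N_def g0
      by (intro mult_right_mono mult_mono) (simp_all add: N_def)
    finally show ?thesis using main unfolding T_def Yr_def CA_def CO_def by simp
  qed
qed

end


context gapnum
begin

definition JJ :: "nat \<Rightarrow> nat \<Rightarrow> nat set" where
  "JJ t l = {j. 1 \<le> j \<and> j \<le> t \<and> (\<exists>v::nat. AA l \<le> v \<and> real v \<le> 3 * real (AA l) \<and> c ^ (j - 1) \<le> real v \<and> real v < c ^ j)}"

definition JS :: "nat \<Rightarrow> nat list set" where
  "JS t = {js. length js = k \<and> (\<forall>l<k. js!l \<in> JJ t l)}"

lemma AA_pos: "l < k \<Longrightarrow> 1 \<le> AA l"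
  unfolding AA_def using g_pos by (simp add: Suc_leI trans_le_add1)

lemma JJ_close:
  assumes lk: "l < k" and j0: "j0 \<in> JJ t l" and j: "j \<in> JJ t l"
  shows "j \<le> j0 + 1"
proof (rule ccontr)
  assume "\<not> j \<le> j0 + 1"
  then have jj: "j0 + 1 \<le> j - 1" by simp
  obtain v0 where v0: "AA l \<le> v0" "real v0 < c ^ j0" using j0 unfolding JJ_def by auto
  obtain v where v: "c ^ (j - 1) \<le> real v" "real v \<le> 3 * real (AA l)" using j unfolding JJ_def by auto
  have c1: "1 \<le> c" using c4 by simp
  have "c ^ (j0 + 1) \<le> c ^ (j - 1)" by (rule power_increasing[OF jj c1])
  then have "c * c ^ j0 \<le> real v" using v by simp
  moreover have "c * real v0 < c * c ^ j0" using v0 c4 by simp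
  moreover have "4 * real (AA l) \<le> c * real v0"
  proof -
    have "4 * real (AA l) \<le> c * real (AA l)" using c4 by (intro mult_right_mono) simp_all
    also have "\<dots> \<le> c * real v0" using v0 c4 by (intro mult_left_mono) simp_all
    finally show ?thesis .
  qed
  moreover have "0 < real (AA l)" using AA_pos[OF lk] by simp
  ultimately show False using v by linarith
qed

lemma card_JJ: "l < k \<Longrightarrow> card (JJ t l) \<le> 2"
proof -
  assume lk: "l < k"
  have fin: "finite (JJ t l)" unfolding JJ_def by (rule finite_subset[of _ "{..t}"]) auto
  show ?thesis
  proof (cases "JJ t l = {}")
    case True then show ?thesis by simp
  next
    case False
    define j0 where "j0 = Min (JJ t l)"
    have j0in: "j0 \<in> JJ t l" unfolding j0_def using Min_in[OF fin False] .
    have "JJ t l \<subseteq> {j0, j0 + 1}"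
    proof
      fix j assume j: "j \<in> JJ t l"
      have "j0 \<le> j" unfolding j0_def using Min_le[OF fin j] .
      moreover have "j \<le> j0 + 1" using JJ_close[OF lk j0in j] .
      ultimately show "j \<in> {j0, j0 + 1}" by auto
    qed
    then have "card (JJ t l) \<le> card {j0, j0 + 1}" by (rule card_mono[rotated]) simp
    also have "\<dots> \<le> 2" by (simp add: card_insert_le_m1)
    finally show ?thesis .
  qed
qed

lemma JS_fin_card: "finite (JS t) \<and> card (JS t) \<le> 2 ^ k"
proof -
  have fin: "\<And>l. l < k \<Longrightarrow> finite (JJ t l)" unfolding JJ_def by (rule finite_subset[of _ "{..t}"]) auto
  have c: "finite (JS t) \<and> card (JS t) = (\<Prod>l<k. card (JJ t l))"
    unfolding JS_def by (rule card_lists_nth[OF fin])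
  have "(\<Prod>l<k. card (JJ t l)) \<le> (\<Prod>l<k. 2)" by (rule prod_mono) (use card_JJ in auto)
  then show ?thesis using c by simp
qed

lemma cover:
  assumes w: "\<omega> \<in> Om m U R H" and ppb: "\<And>p. p < m \<Longrightarrow> pp m \<omega> p < 2 * m"
    and ct: "2 * real m \<le> c ^ t"
  shows "\<exists>js\<in>JS t. tup \<omega> \<in> Pbox c m js"
proof -
  define jf where "jf l = (LEAST j. real (d \<omega> l) < c ^ j)" for l
  define js where "js = map jf [0..<k]"
  have dlt: "real (d \<omega> l) < c ^ t" if lk: "l < k" for l
  proof -
    have "d \<omega> l \<le> pp m \<omega> (a!Suc l)" unfolding d_def by simp
    moreover have "pp m \<omega> (a!Suc l) < 2 * m" using ppb a_m lk by simp
    ultimately show ?thesis using ct by linarith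
  qed
  have jprops: "1 \<le> jf l \<and> jf l \<le> t \<and> c ^ (jf l - 1) \<le> real (d \<omega> l) \<and> real (d \<omega> l) < c ^ jf l"
    if lk: "l < k" for l
  proof -
    have ex: "\<exists>j. real (d \<omega> l) < c ^ j" using dlt[OF lk] by blast
    have lt: "real (d \<omega> l) < c ^ jf l" unfolding jf_def by (rule LeastI_ex[OF ex])
    have le_t: "jf l \<le> t" unfolding jf_def by (rule Least_le) (rule dlt[OF lk])
    have d1: "1 \<le> d \<omega> l" using d_range(1)[OF w lk] AA_pos[OF lk] by simp
    have j1: "1 \<le> jf l"
    proof (rule ccontr)
      assume "\<not> 1 \<le> jf l"
      then have "jf l = 0" by simp
      then show False using lt d1 by simp
    qed
    have "\<not> real (d \<omega> l) < c ^ (jf l - 1)"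
      unfolding jf_def by (rule not_less_Least) (use j1 in \<open>simp add: jf_def\<close>)
    then show ?thesis using lt le_t j1 by simp
  qed
  have "js \<in> JS t"
    unfolding JS_def JJ_def js_def using jprops d_range[OF w] by fastforce
  moreover have "tup \<omega> \<in> Pbox c m js"
    unfolding Pbox_def tup_def js_def using jprops ppb[of "a!0"] a_m[of 0] by auto
  ultimately show ?thesis by blast
qed

lemma good_bound:
  fixes G :: "(nat \<times> nat list) set" and \<theta> :: real
  assumes ppb: "\<And>\<omega> p. \<omega> \<in> Om m U R H \<Longrightarrow> p < m \<Longrightarrow> pp m \<omega> p < 2 * m"
    and ct: "2 * real m \<le> c ^ t" and th: "0 \<le> \<theta>"
    and hyp: "\<And>js. js \<in> JS t \<Longrightarrow> real (card {p\<in>Pbox c m js. p \<in> G}) \<le> \<theta> * real (card (Pbox c m js))"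
  shows "real (card {\<omega>\<in>Om m U R H. tup \<omega> \<in> G})
          \<le> 2 ^ k * \<theta> * ((16 / \<delta>) * (288 * c / \<delta>) * (162 * c * L0 / \<delta>) ^ (k - 1)) * real (card (Om m U R H))"
proof -
  define Kc where "Kc = (16 / \<delta>) * (288 * c / \<delta>) * (162 * c * L0 / \<delta>) ^ (k - 1)"
  define CO where "CO = real (card (Om m U R H))"
  define PG where "PG js = {p\<in>Pbox c m js. p \<in> G}" for js
  have Kc0: "0 \<le> Kc" unfolding Kc_def using dpos c4 L01 by simp
  have CO0: "0 \<le> CO" unfolding CO_def by simp
  have finJS: "finite (JS t)" and cJS: "card (JS t) \<le> 2 ^ k" using JS_fin_card by auto
  have finPG: "finite (PG js)" for js unfolding PG_def using card_Pbox[of c m js] by simp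
  have sub: "{\<omega>\<in>Om m U R H. tup \<omega> \<in> G} \<subseteq> (\<Union>js\<in>JS t. \<Union>p\<in>PG js. Ap p)"
  proof
    fix \<omega> assume "\<omega> \<in> {\<omega>\<in>Om m U R H. tup \<omega> \<in> G}"
    then have w: "\<omega> \<in> Om m U R H" "tup \<omega> \<in> G" by auto
    obtain js where "js \<in> JS t" "tup \<omega> \<in> Pbox c m js" using cover[OF w(1) ppb[OF w(1)] ct] by blast
    then show "\<omega> \<in> (\<Union>js\<in>JS t. \<Union>p\<in>PG js. Ap p)" using w unfolding PG_def Ap_def by auto
  qed
  have "card {\<omega>\<in>Om m U R H. tup \<omega> \<in> G} \<le> card (\<Union>js\<in>JS t. \<Union>p\<in>PG js. Ap p)"
  proof (rule card_mono[OF _ sub])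
    have fA: "finite (Ap p)" for p unfolding Ap_def using finite_Om by simp
    show "finite (\<Union>js\<in>JS t. \<Union>p\<in>PG js. Ap p)"
      by (intro finite_UN_I finJS finPG fA)
  qed
  also have "\<dots> \<le> (\<Sum>js\<in>JS t. card (\<Union>p\<in>PG js. Ap p))" by (rule card_UN_le[OF finJS])
  also have "\<dots> \<le> (\<Sum>js\<in>JS t. \<Sum>p\<in>PG js. card (Ap p))"
    by (rule sum_mono) (rule card_UN_le[OF finPG])
  finally have c0: "real (card {\<omega>\<in>Om m U R H. tup \<omega> \<in> G}) \<le> real (\<Sum>js\<in>JS t. \<Sum>p\<in>PG js. card (Ap p))"
    by (simp only: of_nat_le_iff)
  then have c1: "real (card {\<omega>\<in>Om m U R H. tup \<omega> \<in> G}) \<le> (\<Sum>js\<in>JS t. \<Sum>p\<in>PG js. real (card (Ap p)))"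
    by (simp add: of_nat_sum)
  have each: "(\<Sum>p\<in>PG js. real (card (Ap p))) \<le> \<theta> * Kc * CO" if jsin: "js \<in> JS t" for js
  proof (cases "PG js = {}")
    case True then show ?thesis using th Kc0 CO0 by simp
  next
    case False
    have ljs: "length js = k" using jsin unfolding JS_def by simp
    then obtain p0 where "p0 \<in> PG js" using False by blast
    then have "p0 \<in> Pbox c m js" unfolding PG_def by simp
    then have cP: "0 < card (Pbox c m js)" using card_Pbox[of c m js] card_gt_0_iff by blast
    define CP where "CP = real (card (Pbox c m js))"
    have CP0: "0 < CP" unfolding CP_def using cP by simp
    have "(\<Sum>p\<in>PG js. real (card (Ap p))) \<le> (\<Sum>p\<in>PG js. Kc * CO / CP)"
    proof (rule sum_mono)
      fix p assume "p \<in> PG js"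
      then have "p \<in> Pbox c m js" unfolding PG_def by simp
      then have "real (card (Ap p)) * CP \<le> Kc * CO" using point_ratio[OF ljs] unfolding Kc_def CO_def CP_def by blast
      then show "real (card (Ap p)) \<le> Kc * CO / CP" using CP0 by (simp add: field_simps)
    qed
    also have "\<dots> = real (card (PG js)) * (Kc * CO / CP)" by simp
    also have "\<dots> \<le> (\<theta> * CP) * (Kc * CO / CP)"
      using hyp[OF jsin] Kc0 CO0 CP0 unfolding PG_def CP_def by (intro mult_right_mono) simp_all
    also have "\<dots> = \<theta> * Kc * CO" using CP0 by (simp add: field_simps)
    finally show ?thesis .
  qed
  have "(\<Sum>js\<in>JS t. \<Sum>p\<in>PG js. real (card (Ap p))) \<le> (\<Sum>js\<in>JS t. \<theta> * Kc * CO)"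
    by (rule sum_mono) (rule each)
  also have "\<dots> = real (card (JS t)) * (\<theta> * Kc * CO)" by simp
  also have "\<dots> \<le> 2 ^ k * (\<theta> * Kc * CO)"
  proof (rule mult_right_mono)
    show "real (card (JS t)) \<le> 2 ^ k" using cJS by (metis of_nat_le_iff of_nat_numeral of_nat_power)
  qed (use th Kc0 CO0 in simp)
  finally show ?thesis using c1 unfolding Kc_def CO_def by (simp add: ac_simps)
qed

end


context gapst
begin

lemma sum_take_d:
  assumes "l \<le> k"
  shows "pp m \<omega> (a!0) + sum_list (take l (map (d \<omega>) [0..<k])) = pp m \<omega> (a!l)"
  using assms
proof (induction l)
  case 0 then show ?case by simp
next
  case (Suc l)
  have lk: "l < k" using Suc.prems by simp
  have "take (Suc l) (map (d \<omega>) [0..<k]) = take l (map (d \<omega>) [0..<k]) @ [d \<omega> l]"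
    using lk by (simp add: take_Suc_conv_app_nth)
  then have "sum_list (take (Suc l) (map (d \<omega>) [0..<k])) = sum_list (take l (map (d \<omega>) [0..<k])) + d \<omega> l"
    by simp
  moreover have "pp m \<omega> (a!l) \<le> pp m \<omega> (a!Suc l)" using pp_mono[OF a_lt[OF lk], of m \<omega>] by simp
  ultimately show ?case using Suc.IH lk unfolding d_def by simp
qed

lemma tup_set: "tuple_set (tup \<omega>) = pp m \<omega> ` set a"
proof -
  have "tuple_set (tup \<omega>) = {pp m \<omega> (a!0) + sum_list (take l (map (d \<omega>) [0..<k])) | l. l \<le> k}"
    unfolding tuple_set_def tup_def by simp
  also have "\<dots> = {pp m \<omega> (a!l) | l. l \<le> k}"
    by (rule Collect_cong) (metis sum_take_d)
  also have "\<dots> = pp m \<omega> ` set a"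
  proof -
    have "set a = {a!l | l. l \<le> k}" using len by (auto simp: set_conv_nth less_Suc_eq_le)
    then show ?thesis by auto
  qed
  finally show ?thesis .
qed

end

lemma sorted_image_strict:
  fixes f :: "nat \<Rightarrow> nat" and A :: "nat set"
  assumes fin: "finite A" and mono: "\<And>x y. x < y \<Longrightarrow> f x < f y"
  shows "sorted_list_of_set (f ` A) = map f (sorted_list_of_set A)"
proof -
  have s: "sorted_wrt (<) (sorted_list_of_set A)" by simp
  have s2: "sorted_wrt (<) (map f (sorted_list_of_set A))"
    unfolding sorted_wrt_map by (rule sorted_wrt_mono_rel[OF _ s]) (simp add: mono)
  have inj: "inj_on f A"
    by (rule inj_onI) (metis mono linorder_neq_iff less_irrefl)
  have st: "set (map f (sorted_list_of_set A)) = f ` A" using fin by simp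
  have ln: "length (map f (sorted_list_of_set A)) = card (f ` A)"
    using fin inj by (simp add: card_image)
  show ?thesis using sorted_list_of_set_unique[of "f ` A" "map f (sorted_list_of_set A)"] fin s2 st ln
    by simp
qed

lemma budget:
  assumes w: "\<omega> \<in> Om m U R H" and pm: "p \<le> m" and H0: "0 < H"
    and NSb: "\<And>s. 2 ^ s < m \<Longrightarrow> s < NS"
  shows "real (ee m \<omega> p) \<le> real U + real R + 2 * real NS * real m / real H"
proof -
  obtain u r Y where o: "\<omega> = (u, r, Y)" by (cases \<omega>) auto
  have uU: "u < U" and rR: "r < R" and Y: "Y \<in> PiE (Blk m) (Fy H)" using w o unfolding Om_def by auto
  have rd: "(r * p) div m \<le> r"
  proof (cases "m = 0")
    case True then show ?thesis by simp
  next
    case False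
    have "r * p \<le> r * m" using pm by simp
    then have "(r * p) div m \<le> (r * m) div m" by (rule div_le_mono)
    then show ?thesis using False by simp
  qed
  have YB: "Y z \<le> 2 * hh H (fst z)" if "z \<in> Blk m" for z
    using Y that by (auto simp: PiE_iff Fy_def)
  have "sum Y {z\<in>Blk m. bnd z \<le> p} \<le> sum Y (Blk m)"
    by (rule sum_mono2) (auto simp: finite_Blk)
  also have "\<dots> \<le> (\<Sum>z\<in>Blk m. 2 * hh H (fst z))" by (rule sum_mono) (rule YB)
  finally have sY: "real (sum Y {z\<in>Blk m. bnd z \<le> p}) \<le> 2 * (\<Sum>z\<in>Blk m. real (hh H (fst z)))"
    by (simp add: sum_distrib_left[symmetric] of_nat_sum[symmetric] del: of_nat_sum) 
  define Bs where "Bs s = {b. 1 \<le> b \<and> b * 2^s < m}" for s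
  have sub: "Blk m \<subseteq> Sigma {..<NS} Bs"
  proof
    fix z assume z: "z \<in> Blk m"
    then have "1 \<le> snd z" "snd z * 2 ^ fst z < m" unfolding Blk_def bnd_def by auto
    moreover have "2 ^ fst z \<le> snd z * 2 ^ fst z" using \<open>1 \<le> snd z\<close> by simp
    ultimately have "fst z < NS" using NSb by (meson le_less_trans)
    then show "z \<in> Sigma {..<NS} Bs" using \<open>1 \<le> snd z\<close> \<open>snd z * 2 ^ fst z < m\<close>
      unfolding Bs_def by (cases z) auto
  qed
  have finBs: "finite (Bs s)" for s
    unfolding Bs_def by (rule finite_subset[of _ "{..<m}"]) (auto, metis le_less_trans mult_le_mono2 mult.right_neutral one_le_numeral one_le_power)
  have "(\<Sum>z\<in>Blk m. real (hh H (fst z))) \<le> (\<Sum>z\<in>Blk m. 2 ^ fst z / real H)"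
    by (rule sum_mono) (rule hh_le)
  also have "\<dots> \<le> (\<Sum>z\<in>Sigma {..<NS} Bs. 2 ^ fst z / real H)"
    by (rule sum_mono2[OF _ sub]) (auto simp: finBs)
  also have "\<dots> = (\<Sum>s<NS. \<Sum>b\<in>Bs s. 2 ^ s / real H)"
    using sum.Sigma[of "{..<NS}" Bs "\<lambda>s b. 2^s / real H"] finBs by (simp add: split_def)
  also have "\<dots> = (\<Sum>s<NS. real (card (Bs s) * 2 ^ s) / real H)" by simp
  also have "\<dots> \<le> (\<Sum>s<NS. real m / real H)"
  proof (rule sum_mono)
    fix s
    have "card (Bs s) * 2 ^ s \<le> m" unfolding Bs_def by (rule card_blocks_le) simp
    then have "real (card (Bs s) * 2 ^ s) \<le> real m" by (simp only: of_nat_le_iff)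
    then show "real (card (Bs s) * 2 ^ s) / real H \<le> real m / real H" by (simp add: divide_right_mono)
  qed
  also have "\<dots> = real NS * real m / real H" by simp
  finally have sH: "(\<Sum>z\<in>Blk m. real (hh H (fst z))) \<le> real NS * real m / real H" .
  have "real (ee m \<omega> p) = real u + real ((r * p) div m) + real (sum Y {z\<in>Blk m. bnd z \<le> p})"
    unfolding ee_def o by simp
  also have "\<dots> \<le> real U + real R + 2 * (real NS * real m / real H)"
    using uU rR rd sY sH by (smt (verit) of_nat_le_iff of_nat_less_iff)
  finally show ?thesis by simp
qed


lemma numeric_bound:
  fixes j :: nat and c \<delta> \<epsilon> L :: real
  assumes c4: "4 \<le> c" and d0: "0 < \<delta>" and e0: "0 < \<epsilon>" and L0: "0 < L"
  shows "2 ^ (j + 1) * ((\<epsilon> / (256 * c^2 / \<delta>) ^ (j + 2)) / L ^ j)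
         * ((16 / \<delta>) * (288 * c / \<delta>) * (162 * c * L / \<delta>) ^ j) \<le> \<epsilon> / 4"
proof -
  have c0: "0 < c" using c4 by simp
  define X where "X = 256 * c^2 / \<delta>"
  define Y where "Y = 162 * c * L / \<delta>"
  have X0: "0 < X" unfolding X_def using c0 d0 by simp
  have e1: "X ^ (j + 2) = X^2 * X ^ j" by (rule trans[OF power_add mult.commute])
  have e2: "(2::real) ^ (j + 1) = 2 * 2 ^ j" by simp
  have "2 ^ (j + 1) * ((\<epsilon> / X ^ (j + 2)) / L ^ j) * ((16 / \<delta>) * (288 * c / \<delta>) * Y ^ j)
      = (\<epsilon> * (2 * 16 * 288 * c / (\<delta> * \<delta> * X^2))) * ((2 ^ j * Y ^ j) / (L ^ j * X ^ j))"
    unfolding e1 e2 using X0 L0 d0 by (simp add: field_simps)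
  also have "(2 ^ j * Y ^ j) / (L ^ j * X ^ j) = (2 * Y / (L * X)) ^ j"
    by (simp add: power_divide power_mult_distrib)
  also have "2 * Y / (L * X) = 324 / (256 * c)"
    unfolding X_def Y_def using c0 d0 L0 by (simp add: field_simps power2_eq_square)
  also have "2 * 16 * 288 * c / (\<delta> * \<delta> * X^2) = 9216 / (65536 * c^3)"
    unfolding X_def using c0 d0 by (simp add: field_simps power2_eq_square power3_eq_cube)
  finally have eq: "2 ^ (j + 1) * ((\<epsilon> / X ^ (j + 2)) / L ^ j) * ((16 / \<delta>) * (288 * c / \<delta>) * Y ^ j)
      = \<epsilon> * (9216 / (65536 * c^3)) * (324 / (256 * c)) ^ j" .
  have b1: "9216 / (65536 * c^3) \<le> 1 / 4"
  proof -
    have "4^3 \<le> c^3" using c4 by (intro power_mono) simp_all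
    then have "64 \<le> c^3" by simp
    then show ?thesis using c0 by (simp add: field_simps)
  qed
  have b2: "(324 / (256 * c)) ^ j \<le> 1"
  proof -
    have "324 / (256 * c) \<le> 1" using c4 by (simp add: field_simps)
    moreover have "0 \<le> 324 / (256 * c)" using c0 by simp
    ultimately show ?thesis by (simp add: power_le_one)
  qed
  have "\<epsilon> * (9216 / (65536 * c^3)) * (324 / (256 * c)) ^ j \<le> \<epsilon> * (1/4) * 1"
    using b1 b2 e0 c0 by (intro mult_mono) simp_all
  then show ?thesis using eq unfolding X_def Y_def by simp
qed


lemma pmf_avg:
  fixes M :: "'a pmf" and I :: "'i set" and E :: "'i \<Rightarrow> 'a set" and \<beta> B :: real
  assumes fin: "finite I" and lo: "\<And>i. i \<in> I \<Longrightarrow> \<beta> \<le> measure_pmf.prob M (E i)"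
    and up: "\<And>z. z \<in> set_pmf M \<Longrightarrow> real (card {i\<in>I. z \<in> E i}) \<le> B"
  shows "real (card I) * \<beta> \<le> B"
proof -
  have meas: "f \<in> borel_measurable (measure_pmf M)" for f :: "'a \<Rightarrow> real" by simp
  have intI: "integrable (measure_pmf M) (indicator (E i) :: 'a \<Rightarrow> real)" for i
    by (rule measure_pmf.integrable_const_bound[where B=1]) (auto simp: indicator_def)
  have cnt: "real (card {i\<in>I. z \<in> E i}) = (\<Sum>i\<in>I. indicator (E i) z)" for z
  proof -
    have "(\<Sum>i\<in>I. indicator (E i) z :: real) = (\<Sum>i\<in>{i\<in>I. z \<in> E i}. 1)"
      using fin by (simp add: indicator_def sum.If_cases Int_def)
    then show ?thesis by simp
  qed
  have "real (card I) * \<beta> = (\<Sum>i\<in>I. \<beta>)" by simp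
  also have "\<dots> \<le> (\<Sum>i\<in>I. measure_pmf.prob M (E i))" by (rule sum_mono) (rule lo)
  also have "\<dots> = (\<Sum>i\<in>I. measure_pmf.expectation M (indicator (E i)))"
    by (simp add: integral_indicator)
  also have "\<dots> = measure_pmf.expectation M (\<lambda>z. \<Sum>i\<in>I. indicator (E i) z)"
    using Bochner_Integration.integral_sum[of I "measure_pmf M" "\<lambda>i. indicator (E i)"] intI by simp
  also have "\<dots> = measure_pmf.expectation M (\<lambda>z. real (card {i\<in>I. z \<in> E i}))"
    by (simp add: cnt)
  also have "\<dots> \<le> B"
  proof (rule measure_pmf.integral_le_const)
    show "integrable (measure_pmf M) (\<lambda>z. real (card {i\<in>I. z \<in> E i}))"
      by (rule measure_pmf.integrable_const_bound[where B="real (card I)"])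
         (auto intro!: card_mono simp: fin)
    show "AE x in measure_pmf M. real (card {i\<in>I. x \<in> E i}) \<le> B"
      using up by (simp add: AE_measure_pmf_iff)
  qed
  finally show ?thesis .
qed


lemma card_strings: "finite (strings n) \<and> card (strings n) = 2 ^ n"
proof -
  have "strings n = {xs. set xs \<subseteq> (UNIV :: bool set) \<and> length xs = n}" unfolding strings_def by simp
  moreover have "finite {xs. set xs \<subseteq> (UNIV :: bool set) \<and> length xs = n}"
    by (rule finite_lists_length_eq) simp
  moreover have "card {xs. set xs \<subseteq> (UNIV :: bool set) \<and> length xs = n} = 2 ^ n"
    using card_lists_length_eq[of "UNIV :: bool set" n] by simp
  ultimately show ?thesis by simp
qed

lemma Om_nonempty: "1 \<le> U \<Longrightarrow> 1 \<le> R \<Longrightarrow> 0 < card (Om m U R H)"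
proof -
  assume "1 \<le> U" "1 \<le> R"
  moreover have "0 < (\<Prod>z\<in>Blk m. card (Fy H z))" by (rule prod_pos) (simp add: card_Fy)
  ultimately show ?thesis unfolding card_Om by simp
qed

lemma numeric_bound_q:
  fixes q :: nat and c \<delta> \<epsilon> L :: real
  assumes q2: "2 \<le> q" and c4: "4 \<le> c" and d0: "0 < \<delta>" and e0: "0 < \<epsilon>" and L0: "0 < L"
  shows "2 ^ (q - 1) * ((\<epsilon> / (256 * c^2 / \<delta>) ^ q) / L ^ (q - 2))
         * ((16 / \<delta>) * (288 * c / \<delta>) * (162 * c * L / \<delta>) ^ (q - 2)) \<le> \<epsilon> / 4"
proof -
  define j where "j = q - 2"
  have e1: "q - 1 = j + 1" and e2: "q = j + 2" using q2 unfolding j_def by simp_all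
  show ?thesis unfolding e1 j_def[symmetric] using numeric_bound[OF c4 d0 e0 L0, of j]
    by (simp only: e2)
qed

locale fin_setup =
  fixes q n m U R H NS t :: nat and \<delta> \<epsilon> c L0 :: real and C :: "bool list \<Rightarrow> bool list" and i :: nat
  assumes q3: "3 \<le> q" and dpos: "0 < \<delta>" and dlt: "\<delta> < 1" and e0: "0 < \<epsilon>"
    and c4: "4 \<le> c" and L01: "1 \<le> L0"
    and NSb: "\<And>s. 2 ^ s < m \<Longrightarrow> s < NS" and NSL: "real NS \<le> L0"
    and Hlo: "8 * L0 / \<delta> \<le> real H" and Hhi: "real H \<le> 9 * L0 / \<delta>"
    and Ulo: "\<delta> * m / 8 \<le> real U" and Upos: "1 \<le> U" and Uhi: "real U \<le> \<delta> * m / 4"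
    and Rlo: "\<delta> * m / 8 \<le> real R" and Rpos: "1 \<le> R" and Rhi2: "real R \<le> \<delta> * m / 4"
    and ct: "2 * real m \<le> c ^ t" and mq: "q \<le> m"
begin

lemma H0: "0 < H"
proof -
  have "0 < 8 * L0 / \<delta>" using L01 dpos by simp
  then show ?thesis using Hlo by simp
qed

lemma ee_bound:
  assumes w: "\<omega> \<in> Om m U R H" and pm: "p \<le> m"
  shows "real (ee m \<omega> p) \<le> 3 * \<delta> * m / 4"
proof -
  have b: "real (ee m \<omega> p) \<le> real U + real R + 2 * real NS * real m / real H"
    by (rule budget[OF w pm H0 NSb])
  have "2 * real NS * real m / real H \<le> \<delta> * m / 4"
  proof -
    have Hp: "0 < real H" using H0 by simp
    have "2 * real NS * real m \<le> 2 * L0 * real m" using NSL by (simp add: mult_right_mono)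
    also have "\<dots> = (8 * L0 / \<delta>) * (\<delta> * m / 4)" using dpos by (simp add: field_simps)
    also have "\<dots> \<le> real H * (\<delta> * m / 4)" using Hlo dpos by (intro mult_right_mono) simp_all
    finally show ?thesis using Hp by (simp add: field_simps)
  qed
  then show ?thesis using b Uhi Rhi2 by linarith
qed

lemma Rhi: "4 * R \<le> m"
proof -
  have "real (4 * R) \<le> \<delta> * m" using Rhi2 by simp
  also have "\<dots> \<le> real m" using dlt mult_right_mono[of \<delta> 1 "real m"] by simp
  finally show ?thesis by simp
qed

lemma ppb: "\<omega> \<in> Om m U R H \<Longrightarrow> p < m \<Longrightarrow> pp m \<omega> p < 2 * m"
proof -
  assume w: "\<omega> \<in> Om m U R H" and pm: "p < m"
  have "real (ee m \<omega> p) \<le> 3 * \<delta> * m / 4" using ee_bound[OF w] pm by simp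
  also have "\<dots> < real m"
  proof -
    have "0 < real m" using pm by simp
    then have "\<delta> * real m < 1 * real m" using dlt by (intro mult_strict_right_mono) simp_all
    then show ?thesis by simp
  qed
  finally have "ee m \<omega> p < m" by simp
  then show ?thesis unfolding pp_def using pm by simp
qed

definition EE :: nat where "EE = nat \<lfloor>\<delta> * m\<rfloor>"

lemma pp_le_E: "\<omega> \<in> Om m U R H \<Longrightarrow> p < m \<Longrightarrow> pp m \<omega> p \<le> p + EE"
proof -
  assume w: "\<omega> \<in> Om m U R H" and pm: "p < m"
  have "real (ee m \<omega> p) \<le> 3 * \<delta> * m / 4" using ee_bound[OF w] pm by simp
  also have "\<dots> \<le> \<delta> * m" using dpos by simp
  finally have "real (ee m \<omega> p) \<le> \<delta> * m" .
  then have "ee m \<omega> p \<le> EE" unfolding EE_def by linarith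
  then show ?thesis unfolding pp_def by simp
qed

lemma EE_le: "EE \<le> m" and EE_real: "real EE \<le> \<delta> * m"
proof -
  have "0 \<le> \<delta> * m" using dpos by simp
  then show "real EE \<le> \<delta> * m" unfolding EE_def by linarith
  also have "\<dots> \<le> real m" using dlt mult_right_mono[of \<delta> 1 "real m"] by simp
  finally show "EE \<le> m" by simp
qed

definition yy :: "nat \<times> nat \<times> (nat \<times> nat \<Rightarrow> nat) \<Rightarrow> bool list \<Rightarrow> bool list \<Rightarrow> bool list" where
  "yy \<omega> cx r = map (\<lambda>p. (cx @ r) ! pp m \<omega> p) [0..<m]"

lemma ED_yy:
  assumes w: "\<omega> \<in> Om m U R H" and lc: "length cx = m" and lr: "length r = m"
  shows "real (ED cx (yy \<omega> cx r)) \<le> 2 * \<delta> * m"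
proof -
  have "ED cx (yy \<omega> cx r) \<le> 2 * EE"
    unfolding yy_def
  proof (rule ED_adversary[OF lc lr _ _ _ EE_le])
    show "\<And>a b. a < b \<Longrightarrow> b < m \<Longrightarrow> pp m \<omega> a < pp m \<omega> b" by (rule pp_mono)
    show "\<And>p. p < m \<Longrightarrow> p \<le> pp m \<omega> p" by (simp add: pp_def)
    show "\<And>p. p < m \<Longrightarrow> pp m \<omega> p \<le> p + EE" by (rule pp_le_E[OF w])
  qed
  then have "real (ED cx (yy \<omega> cx r)) \<le> 2 * real EE" by simp
  then show ?thesis using EE_real by linarith
qed

lemma Q_extend:
  assumes Qm: "\<forall>p\<in>set Q. p < m" and Ql: "length Q \<le> q"
  obtains Q' where "set Q \<subseteq> Q'" "Q' \<subseteq> {..<m}" "card Q' = q" "finite Q'"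
proof -
  have sQ: "set Q \<subseteq> {..<m}" using Qm by auto
  have cQ: "card (set Q) \<le> q" using Ql card_length order_trans by blast
  have "q - card (set Q) \<le> card ({..<m} - set Q)"
    using sQ mq by (simp add: card_Diff_subset)
  then obtain T where T: "T \<subseteq> {..<m} - set Q" "card T = q - card (set Q)" "finite T"
    by (rule obtain_subset_with_card_n)
  have "card (set Q \<union> T) = card (set Q) + card T"
    using T by (intro card_Un_disjoint) auto
  then have "card (set Q \<union> T) = q" using T cQ by simp
  moreover have "set Q \<subseteq> set Q \<union> T" "set Q \<union> T \<subseteq> {..<m}" "finite (set Q \<union> T)" using T sQ by auto
  ultimately show ?thesis using that by blast
qed

lemma count_Q:
  assumes neg: "\<And>js. length js = q - 1 \<Longrightarrow> set js \<subseteq> {1..t} \<Longrightarrow>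
       real (card {p\<in>Pbox c m js. tuple_set p \<in> Good q \<epsilon> n m C i})
         < (\<epsilon> / (256 * c^2 / \<delta>) ^ q) * real (card (Pbox c m js)) / L0 ^ (q - 2)"
    and Qm: "\<forall>p\<in>set Q. p < m" and Ql: "length Q \<le> q"
  shows "real (card {\<iota> \<in> Om m U R H \<times> (strings n \<times> strings m).
            f (map (\<lambda>p. yy (fst \<iota>) (C (fst (snd \<iota>))) (snd (snd \<iota>)) ! p) Q) = fst (snd \<iota>) ! i})
         \<le> (1/2 + \<epsilon>/2) * real (card (Om m U R H)) * 2 ^ (n + m)"
proof -
  obtain Q' where Q': "set Q \<subseteq> Q'" "Q' \<subseteq> {..<m}" "card Q' = q" "finite Q'"
    using Q_extend[OF Qm Ql] by blast
  define a where "a = sorted_list_of_set Q'"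
  have la: "length a = Suc (q - 1)" unfolding a_def using Q' q3 by simp
  have sa: "sorted_wrt (<) a" unfolding a_def by simp
  have seta: "set a = Q'" unfolding a_def using Q' by simp
  have lta: "\<forall>x\<in>set a. x < m" using seta Q' by auto
  interpret G: gapnum m U R H a "q - 1" \<delta> c L0 NS
  proof unfold_locales
    show "length a = Suc (q - 1)" by (rule la)
    show "1 \<le> q - 1" using q3 by simp
    show "sorted_wrt (<) a" by (rule sa)
    show "\<forall>x\<in>set a. x < m" by (rule lta)
    show "0 < H" by (rule H0)
    show "4 * R \<le> m" by (rule Rhi)
  qed (use dpos dlt c4 L01 NSb NSL Hlo Hhi Ulo Upos Rlo Rpos in auto)
  define Gd where "Gd = {p. tuple_set p \<in> Good q \<epsilon> n m C i}"
  define \<theta> where "\<theta> = (\<epsilon> / (256 * c^2 / \<delta>) ^ q) / L0 ^ (q - 2)"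
  define CO where "CO = real (card (Om m U R H))"
  have th0: "0 \<le> \<theta>" unfolding \<theta>_def using e0 dpos c4 L01 by simp
  have gb: "real (card {\<omega>\<in>Om m U R H. G.tup \<omega> \<in> Gd}) \<le> \<epsilon> / 4 * CO"
  proof -
    have hyp: "real (card {p\<in>Pbox c m js. p \<in> Gd}) \<le> \<theta> * real (card (Pbox c m js))"
      if jsin: "js \<in> G.JS t" for js
    proof -
      have "length js = q - 1" using jsin unfolding G.JS_def by simp
      moreover have "set js \<subseteq> {1..t}"
      proof
        fix j assume "j \<in> set js"
        then obtain l where "l < length js" "js ! l = j" by (auto simp: in_set_conv_nth)
        then show "j \<in> {1..t}" using jsin unfolding G.JS_def G.JJ_def by auto
      qed
      ultimately have "real (card {p\<in>Pbox c m js. tuple_set p \<in> Good q \<epsilon> n m C i})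
         < (\<epsilon> / (256 * c^2 / \<delta>) ^ q) * real (card (Pbox c m js)) / L0 ^ (q - 2)" by (rule neg)
      then show ?thesis unfolding Gd_def \<theta>_def by simp
    qed
    have "real (card {\<omega>\<in>Om m U R H. G.tup \<omega> \<in> Gd})
          \<le> 2 ^ (q - 1) * \<theta> * ((16 / \<delta>) * (288 * c / \<delta>) * (162 * c * L0 / \<delta>) ^ (q - 1 - 1)) * CO"
      unfolding CO_def by (rule G.good_bound[OF ppb ct th0 hyp]) auto
    also have "2 ^ (q - 1) * \<theta> * ((16 / \<delta>) * (288 * c / \<delta>) * (162 * c * L0 / \<delta>) ^ (q - 1 - 1)) \<le> \<epsilon> / 4"
    proof -
      have "q - 1 - 1 = q - 2" by simp
      moreover have "0 < L0" using L01 by simp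
      ultimately show ?thesis unfolding \<theta>_def using numeric_bound_q[OF _ c4 dpos e0, of q L0] q3
        by (simp add: mult.assoc)
    qed
    finally show ?thesis unfolding CO_def by (simp add: mult_right_mono)
  qed
  define XR where "XR = strings n \<times> strings m"
  have finXR: "finite XR" and cXR: "card XR = 2 ^ (n + m)"
    unfolding XR_def using card_strings[of n] card_strings[of m] by (auto simp: card_cartesian_product power_add)
  define idx where "idx p = (LEAST j. a ! j = p)" for p
  have idx: "idx p < length a \<and> a ! idx p = p" if "p \<in> Q'" for p
  proof -
    have "\<exists>j. j < length a \<and> a ! j = p" using that seta by (auto simp: in_set_conv_nth)
    then obtain j0 where j0: "j0 < length a" "a ! j0 = p" by blast
    have "a ! idx p = p" unfolding idx_def by (rule LeastI[of _ j0]) (rule j0(2))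
    moreover have "idx p \<le> j0" unfolding idx_def by (rule Least_le) (rule j0(2))
    ultimately show ?thesis using j0 by simp
  qed
  define f' where "f' w = f (map (\<lambda>p. w ! idx p) Q)" for w :: "bool list"
  define P where "P \<omega> xr = (f (map (\<lambda>p. yy \<omega> (C (fst xr)) (snd xr) ! p) Q) = fst xr ! i)" for \<omega> xr
  have per: "real (card {xr\<in>XR. P \<omega> xr}) \<le> (1/2 + \<epsilon>/4) * 2 ^ (n + m) + (if G.tup \<omega> \<in> Gd then 2 ^ (n + m) else 0)"
    if w: "\<omega> \<in> Om m U R H" for \<omega>
  proof -
    define S where "S = pp m \<omega> ` Q'"
    have rw: "restrict_word w S = map (\<lambda>p. w ! pp m \<omega> p) a" for w
    proof -
      have "sorted_list_of_set S = map (pp m \<omega>) (sorted_list_of_set Q')"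
        unfolding S_def by (rule sorted_image_strict[OF Q'(4)]) (rule pp_mono)
      then show ?thesis unfolding restrict_word_def a_def by simp
    qed
    have Peq: "P \<omega> (x, r) = (f' (restrict_word (C x @ r) S) = x ! i)" for x r
    proof -
      have meq: "map (\<lambda>p. yy \<omega> (C x) r ! p) Q = map (\<lambda>p. restrict_word (C x @ r) S ! idx p) Q"
      proof (rule map_cong[OF refl])
        fix p assume pQ: "p \<in> set Q"
        then have pm: "p < m" using Qm by auto
        have pQ': "p \<in> Q'" using pQ Q' by auto
        have "yy \<omega> (C x) r ! p = (C x @ r) ! pp m \<omega> p" unfolding yy_def using pm by simp
        also have "\<dots> = restrict_word (C x @ r) S ! idx p"
          unfolding rw using idx[OF pQ'] by simp
        finally show "yy \<omega> (C x) r ! p = restrict_word (C x @ r) S ! idx p" .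
      qed
      have "P \<omega> (x, r) = (f (map (\<lambda>p. yy \<omega> (C x) r ! p) Q) = x ! i)" unfolding P_def by simp
      also have "\<dots> = (f (map (\<lambda>p. restrict_word (C x @ r) S ! idx p) Q) = x ! i)" by (simp only: meq)
      finally show ?thesis unfolding f'_def .
    qed
    have setXR: "{xr\<in>XR. P \<omega> xr} = {(x, r). x \<in> strings n \<and> r \<in> strings m \<and> f' (restrict_word (C x @ r) S) = x ! i}"
      unfolding XR_def using Peq by auto
    show ?thesis
    proof (cases "G.tup \<omega> \<in> Gd")
      case True
      have "card {xr\<in>XR. P \<omega> xr} \<le> card XR" by (rule card_mono[OF finXR]) auto
      then have "real (card {xr\<in>XR. P \<omega> xr}) \<le> 2 ^ (n + m)" using cXR by simp
      moreover have "0 \<le> (1/2 + \<epsilon>/4) * (2::real) ^ (n + m)" using e0 by simp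
      ultimately have "real (card {xr\<in>XR. P \<omega> xr}) \<le> (1/2 + \<epsilon>/4) * 2 ^ (n + m) + 2 ^ (n + m)"
        by linarith
      then show ?thesis using True by simp
    next
      case False
      have tsS: "tuple_set (G.tup \<omega>) = S" unfolding S_def G.tup_set seta ..
      then have nG: "S \<notin> Good q \<epsilon> n m C i" using False unfolding Gd_def by simp
      have Ssub: "S \<subseteq> {0..<2*m}" unfolding S_def using Q' ppb[OF w] by auto
      have inj: "inj_on (pp m \<omega>) Q'" by (rule inj_onI) (metis pp_mono linorder_neq_iff less_irrefl)
      have cS: "card S = q" unfolding S_def using card_image[OF inj] Q' by simp
      have "\<not> (real (card {(x, r). x \<in> strings n \<and> r \<in> strings m \<and>
                     f' (restrict_word (C x @ r) S) = x ! i}) / 2 ^ (n + m) \<ge> 1/2 + \<epsilon>/4)"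
        using nG Ssub cS unfolding Good_def by blast
      then have "real (card {xr\<in>XR. P \<omega> xr}) / 2 ^ (n + m) < 1/2 + \<epsilon>/4"
        unfolding setXR by simp
      then have "real (card {xr\<in>XR. P \<omega> xr}) < (1/2 + \<epsilon>/4) * 2 ^ (n + m)"
        by (simp add: divide_less_eq)
      then show ?thesis using False by simp
    qed
  qed
  have split: "{\<iota> \<in> Om m U R H \<times> (strings n \<times> strings m).
            f (map (\<lambda>p. yy (fst \<iota>) (C (fst (snd \<iota>))) (snd (snd \<iota>)) ! p) Q) = fst (snd \<iota>) ! i}
        = Sigma (Om m U R H) (\<lambda>\<omega>. {xr\<in>XR. P \<omega> xr})"
    unfolding XR_def P_def by auto
  have "real (card (Sigma (Om m U R H) (\<lambda>\<omega>. {xr\<in>XR. P \<omega> xr})))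
        = (\<Sum>\<omega>\<in>Om m U R H. real (card {xr\<in>XR. P \<omega> xr}))"
    using card_SigmaI[of "Om m U R H" "\<lambda>\<omega>. {xr\<in>XR. P \<omega> xr}"] G.finite_Om finXR by simp
  also have "\<dots> \<le> (\<Sum>\<omega>\<in>Om m U R H. (1/2 + \<epsilon>/4) * 2 ^ (n + m) + (if G.tup \<omega> \<in> Gd then 2 ^ (n + m) else 0))"
    by (rule sum_mono) (rule per)
  also have "\<dots> = CO * ((1/2 + \<epsilon>/4) * 2 ^ (n + m)) + 2 ^ (n + m) * real (card {\<omega>\<in>Om m U R H. G.tup \<omega> \<in> Gd})"
    unfolding CO_def by (simp add: sum.distrib sum.If_cases G.finite_Om Int_def)
  also have "\<dots> \<le> CO * ((1/2 + \<epsilon>/4) * 2 ^ (n + m)) + 2 ^ (n + m) * (\<epsilon> / 4 * CO)"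
    using gb by (intro add_left_mono mult_left_mono) simp_all
  also have "\<dots> = (1/2 + \<epsilon>/2) * CO * 2 ^ (n + m)" by (simp add: algebra_simps)
  finally show ?thesis unfolding split CO_def .
qed

lemma contra:
  assumes LDC: "nonadaptive_insdel_LDC q \<delta> \<epsilon> n m C" and iN: "i < n"
    and neg: "\<And>js. length js = q - 1 \<Longrightarrow> set js \<subseteq> {1..t} \<Longrightarrow>
       real (card {p\<in>Pbox c m js. tuple_set p \<in> Good q \<epsilon> n m C i})
         < (\<epsilon> / (256 * c^2 / \<delta>) ^ q) * real (card (Pbox c m js)) / L0 ^ (q - 2)"
  shows False
proof -
  have L: "(\<forall>x\<in>strings n. length (C x) = m) \<and>
     (\<exists>Dec :: decoder.
        (\<forall>m' i Q f. (Q, f) \<in> set_pmf (Dec m' i) \<longrightarrow> length Q \<le> q \<and> (\<forall>p\<in>set Q. p < m')) \<and>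
        (\<forall>x\<in>strings n. \<forall>y :: bool list. \<forall>i<n.
            real (ED (C x) y) \<le> 2 * \<delta> * real m \<longrightarrow>
            dec_output_prob Dec y i (x ! i) \<ge> 1/2 + \<epsilon>))"
    using LDC unfolding nonadaptive_insdel_LDC_def .
  have Cl: "\<forall>x\<in>strings n. length (C x) = m" using L by (rule conjunct1)
  obtain Dec :: decoder where DD:
     "(\<forall>m' i Q f. (Q, f) \<in> set_pmf (Dec m' i) \<longrightarrow> length Q \<le> q \<and> (\<forall>p\<in>set Q. p < m')) \<and>
      (\<forall>x\<in>strings n. \<forall>y :: bool list. \<forall>i<n.
            real (ED (C x) y) \<le> 2 * \<delta> * real m \<longrightarrow>
            dec_output_prob Dec y i (x ! i) \<ge> 1/2 + \<epsilon>)"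
    using L[THEN conjunct2] by (rule exE)
  have D1: "length Q \<le> q \<and> (\<forall>p\<in>set Q. p < m')" if "(Q, f) \<in> set_pmf (Dec m' i')" for m' i' Q f
    using DD[THEN conjunct1] that by blast
  have D2: "dec_output_prob Dec y i' (x ! i') \<ge> 1/2 + \<epsilon>"
    if "x \<in> strings n" "i' < n" "real (ED (C x) y) \<le> 2 * \<delta> * real m" for x y i'
    using DD[THEN conjunct2] that by blast
  define I where "I = Om m U R H \<times> (strings n \<times> strings m)"
  define E where "E \<iota> = {(Q, f). f (map (\<lambda>p. yy (fst \<iota>) (C (fst (snd \<iota>))) (snd (snd \<iota>)) ! p) Q) = fst (snd \<iota>) ! i}"
    for \<iota> :: "(nat \<times> nat \<times> (nat \<times> nat \<Rightarrow> nat)) \<times> bool list \<times> bool list"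
  define CO where "CO = real (card (Om m U R H))"
  have finOm: "finite (Om m U R H)" unfolding Om_def by (simp add: finite_PiE finite_Blk finite_Fy)
  have finI: "finite I" and cI: "real (card I) = CO * 2 ^ (n + m)"
    unfolding I_def CO_def using card_strings[of n] card_strings[of m] finOm
    by (auto simp: card_cartesian_product power_add)
  have CO0: "0 < CO" unfolding CO_def using Om_nonempty[OF Upos Rpos] by simp
  have lo: "1/2 + \<epsilon> \<le> measure_pmf.prob (Dec m i) (E \<iota>)" if "\<iota> \<in> I" for \<iota>
  proof -
    obtain \<omega> x r where io: "\<iota> = (\<omega>, x, r)" by (cases \<iota>) auto
    have w: "\<omega> \<in> Om m U R H" and x: "x \<in> strings n" and r: "r \<in> strings m"
      using that io unfolding I_def by auto
    have lr: "length r = m" using r unfolding strings_def by simp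
    have lc: "length (C x) = m" using Cl x by simp
    define y where "y = yy \<omega> (C x) r"
    have ly: "length y = m" unfolding y_def yy_def by simp
    have "real (ED (C x) y) \<le> 2 * \<delta> * real m" unfolding y_def by (rule ED_yy[OF w lc lr])
    then have "dec_output_prob Dec y i (x ! i) \<ge> 1/2 + \<epsilon>" by (rule D2[OF x iN])
    moreover have "length (yy \<omega> (C x) r) = m" unfolding yy_def by simp
    ultimately show ?thesis unfolding dec_output_prob_def E_def io y_def by simp
  qed
  have up: "real (card {\<iota>\<in>I. z \<in> E \<iota>}) \<le> (1/2 + \<epsilon>/2) * CO * 2 ^ (n + m)"
    if z: "z \<in> set_pmf (Dec m i)" for z
  proof -
    obtain Q f where zq: "z = (Q, f)" by (cases z) auto
    have Qp: "length Q \<le> q" "\<forall>p\<in>set Q. p < m" using D1 z zq by auto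
    have "{\<iota>\<in>I. z \<in> E \<iota>} = {\<iota> \<in> Om m U R H \<times> (strings n \<times> strings m).
            f (map (\<lambda>p. yy (fst \<iota>) (C (fst (snd \<iota>))) (snd (snd \<iota>)) ! p) Q) = fst (snd \<iota>) ! i}"
      unfolding I_def E_def zq by simp
    then show ?thesis using count_Q[OF neg Qp(2) Qp(1), of f] unfolding CO_def by simp
  qed
  have "real (card I) * (1/2 + \<epsilon>) \<le> (1/2 + \<epsilon>/2) * CO * 2 ^ (n + m)"
    by (rule pmf_avg[OF finI lo up])
  then have "CO * 2 ^ (n + m) * (1/2 + \<epsilon>) \<le> CO * 2 ^ (n + m) * (1/2 + \<epsilon>/2)"
    unfolding cI by (simp add: ac_simps)
  moreover have "0 < CO * 2 ^ (n + m)" using CO0 by simp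
  ultimately have "1/2 + \<epsilon> \<le> 1/2 + \<epsilon>/2" by (simp add: mult_le_cancel_left_pos)
  then show False using e0 by simp
qed

end


lemma floor_half: "2 \<le> x \<Longrightarrow> x / 2 \<le> real (nat \<lfloor>x\<rfloor>)"
proof -
  assume "2 \<le> x"
  then have "0 \<le> \<lfloor>x\<rfloor>" by linarith
  then have "real (nat \<lfloor>x\<rfloor>) = real_of_int \<lfloor>x\<rfloor>" by simp
  moreover have "x - 1 < real_of_int \<lfloor>x\<rfloor>" by linarith
  ultimately show ?thesis using \<open>2 \<le> x\<close> by linarith
qed

lemma main_setup:
  fixes q m :: nat and \<delta> \<epsilon> :: real
  assumes q3: "3 \<le> q" and d0: "0 < \<delta>" and d1: "\<delta> < 1" and e0: "0 < \<epsilon>" and e1: "\<epsilon> \<le> 1/2"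
    and mq: "q \<le> m" and m8: "8 / \<delta> \<le> real m"
  shows "fin_setup q m (nat \<lfloor>\<delta> * m / 4\<rfloor>) (nat \<lfloor>\<delta> * m / 4\<rfloor>) (nat \<lceil>8 * (log 2 (real m) + 2) / \<delta>\<rceil>)
           (nat \<lfloor>log 2 (real m)\<rfloor> + 1) (nat \<lceil>log (4 * ln (real q / \<epsilon>)) (2 * real m)\<rceil>)
           \<delta> \<epsilon> (4 * ln (real q / \<epsilon>)) (log 2 (real m) + 2)"
proof -
  define c where "c = 4 * ln (real q / \<epsilon>)"
  define L0 where "L0 = log 2 (real m) + 2"
  define U where "U = nat \<lfloor>\<delta> * m / 4\<rfloor>"
  have m1: "1 \<le> real m" using mq q3 by simp
  have lg0: "0 \<le> log 2 (real m)" using m1 by simp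
  have c4: "4 \<le> c"
  proof -
    have "6 \<le> real q / \<epsilon>"
    proof -
      have "6 * \<epsilon> \<le> 3" using e1 by simp
      also have "\<dots> \<le> real q" using q3 by simp
      finally show ?thesis using e0 by (simp add: field_simps)
    qed
    moreover have "exp (1::real) \<le> 6" using exp_le by simp
    ultimately have "exp 1 \<le> real q / \<epsilon>" by linarith
    then have "1 \<le> ln (real q / \<epsilon>)" using e0 q3 by (simp add: ln_ge_iff)
    then show ?thesis unfolding c_def by simp
  qed
  have L01: "1 \<le> L0" unfolding L0_def using lg0 by simp
  have dm: "2 \<le> \<delta> * m / 4"
  proof -
    have "8 \<le> \<delta> * m" using m8 d0 by (simp add: field_simps)
    then show ?thesis by simp
  qed
  have Ulo: "\<delta> * m / 8 \<le> real U" unfolding U_def using floor_half[OF dm] by simp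
  have Uhi: "real U \<le> \<delta> * m / 4" unfolding U_def using dm by linarith
  have Upos: "1 \<le> U"
  proof -
    have "1 \<le> \<delta> * m / 8" using dm by simp
    then show ?thesis using Ulo by linarith
  qed
  have NSb: "s < nat \<lfloor>log 2 (real m)\<rfloor> + 1" if "2 ^ s < m" for s
  proof -
    have "real (2 ^ s) < real m" using that by linarith
    then have a: "(2::real) ^ s < real m" by simp
    have "log 2 ((2::real) ^ s) < log 2 (real m)"
      using a by (subst log_less_cancel_iff) auto
    moreover have "log 2 ((2::real) ^ s) = real s" by (rule log_pow_cancel) simp_all
    ultimately have "real s < log 2 (real m)" by simp
    then have "int s \<le> \<lfloor>log 2 (real m)\<rfloor>" by linarith
    then show ?thesis by linarith
  qed
  have NSL: "real (nat \<lfloor>log 2 (real m)\<rfloor> + 1) \<le> L0"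
    unfolding L0_def using lg0 by linarith
  have Hlo: "8 * L0 / \<delta> \<le> real (nat \<lceil>8 * L0 / \<delta>\<rceil>)" by linarith
  have Hhi: "real (nat \<lceil>8 * L0 / \<delta>\<rceil>) \<le> 9 * L0 / \<delta>"
  proof -
    have "0 \<le> 8 * L0 / \<delta>" using L01 d0 by simp
    then have "real (nat \<lceil>8 * L0 / \<delta>\<rceil>) \<le> 8 * L0 / \<delta> + 1" by linarith
    moreover have "1 \<le> L0 / \<delta>" using L01 d0 d1 by (simp add: field_simps)
    moreover have "9 * L0 / \<delta> = 8 * L0 / \<delta> + L0 / \<delta>" by (simp add: field_simps)
    ultimately show ?thesis by linarith
  qed
  have ct: "2 * real m \<le> c ^ nat \<lceil>log c (2 * real m)\<rceil>"
  proof -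
    have c1: "1 < c" using c4 by simp
    have "2 * real m = c powr (log c (2 * real m))" using c1 m1 by simp
    also have "\<dots> \<le> c powr (real (nat \<lceil>log c (2 * real m)\<rceil>))"
      by (rule powr_mono) (use c1 in linarith)+
    also have "\<dots> = c ^ nat \<lceil>log c (2 * real m)\<rceil>" using c1 by (simp add: powr_realpow)
    finally show ?thesis .
  qed
  show ?thesis unfolding c_def[symmetric] L0_def[symmetric] U_def[symmetric]
  proof unfold_locales
    show "3 \<le> q" by (rule q3)
  qed (use d0 d1 e0 c4 L01 NSb NSL Hlo Hhi Ulo Upos Uhi ct mq in auto)
qed

theorem mainTheorem19:
  fixes q :: nat and \<delta> \<epsilon> :: real
  assumes "q \<ge> 3" and "0 < \<delta>" and "\<delta> < 1" and "0 < \<epsilon>" and "\<epsilon> \<le> 1/2"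
  shows "\<exists>M. \<forall>m n (C :: bool list \<Rightarrow> bool list). m \<ge> M \<longrightarrow>
           nonadaptive_insdel_LDC q \<delta> \<epsilon> n m C \<longrightarrow>
           (let c = 4 * ln (real q / \<epsilon>);
                t = nat \<lceil>log c (2 * real m)\<rceil>;
                \<gamma> = \<epsilon> / (256 * c^2 / \<delta>) ^ q
            in \<forall>i<n. \<exists>js. length js = q - 1 \<and> set js \<subseteq> {1..t} \<and>
                 real (card {p \<in> Pbox c m js. tuple_set p \<in> Good q \<epsilon> n m C i})
                   \<ge> \<gamma> * real (card (Pbox c m js)) / (log 2 (real m) + 2) ^ (q - 2))"
proof -
  define M where "M = max q (nat \<lceil>8 / \<delta>\<rceil>)"
  show ?thesis
  proof (rule exI[of _ M], intro allI impI)
    fix m n and C :: "bool list \<Rightarrow> bool list"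
    assume mM: "M \<le> m" and LDC: "nonadaptive_insdel_LDC q \<delta> \<epsilon> n m C"
    have mq: "q \<le> m" using mM unfolding M_def by simp
    have m8: "8 / \<delta> \<le> real m"
    proof -
      have "nat \<lceil>8 / \<delta>\<rceil> \<le> m" using mM unfolding M_def by simp
      then show ?thesis by linarith
    qed
    define c where "c = 4 * ln (real q / \<epsilon>)"
    define t where "t = nat \<lceil>log c (2 * real m)\<rceil>"
    define L0 where "L0 = log 2 (real m) + 2"
    show "let c = 4 * ln (real q / \<epsilon>);
                t = nat \<lceil>log c (2 * real m)\<rceil>;
                \<gamma> = \<epsilon> / (256 * c^2 / \<delta>) ^ q
            in \<forall>i<n. \<exists>js. length js = q - 1 \<and> set js \<subseteq> {1..t} \<and>
                 real (card {p \<in> Pbox c m js. tuple_set p \<in> Good q \<epsilon> n m C i})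
                   \<ge> \<gamma> * real (card (Pbox c m js)) / (log 2 (real m) + 2) ^ (q - 2)"
      unfolding Let_def c_def[symmetric] t_def[symmetric] L0_def[symmetric]
    proof (intro allI impI)
      fix i assume iN: "i < n"
      interpret F: fin_setup q n m "nat \<lfloor>\<delta> * m / 4\<rfloor>" "nat \<lfloor>\<delta> * m / 4\<rfloor>"
          "nat \<lceil>8 * L0 / \<delta>\<rceil>" "nat \<lfloor>log 2 (real m)\<rfloor> + 1" t \<delta> \<epsilon> c L0 C i
        unfolding c_def t_def L0_def by (rule main_setup) (use assms mq m8 in auto)
      show "\<exists>js. length js = q - 1 \<and> set js \<subseteq> {1..t} \<and>
                 real (card {p \<in> Pbox c m js. tuple_set p \<in> Good q \<epsilon> n m C i})
                   \<ge> \<epsilon> / (256 * c^2 / \<delta>) ^ q * real (card (Pbox c m js)) / L0 ^ (q - 2)"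
      proof (rule ccontr)
        assume nex: "\<not> (\<exists>js. length js = q - 1 \<and> set js \<subseteq> {1..t} \<and>
                 real (card {p \<in> Pbox c m js. tuple_set p \<in> Good q \<epsilon> n m C i})
                   \<ge> \<epsilon> / (256 * c^2 / \<delta>) ^ q * real (card (Pbox c m js)) / L0 ^ (q - 2))"
        have neg: "real (card {p\<in>Pbox c m js. tuple_set p \<in> Good q \<epsilon> n m C i})
             < (\<epsilon> / (256 * c^2 / \<delta>) ^ q) * real (card (Pbox c m js)) / L0 ^ (q - 2)"
          if "length js = q - 1" "set js \<subseteq> {1..t}" for js
          using nex that by (meson not_le)
        show False by (rule F.contra[OF LDC iN neg])
      qed
    qed
  qed
qed


end
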